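(* Let $\lambda\in\Lambda(n,r)$ and write $S=S_0(n,r)$. (1) If $\lambda_i\lambda_{i+1}=0$ then $a_i(\lambda)=k_\lambda$. (2) For every decomposition $\underline m$ of $n$, the left ideal $S\,o_{\lambda,\underline m}$ is spanned by the orbits $e_A$ with $\mathrm{co}(A)=\lambda$ and $A$ column generic with respect to $\underline m$; in particular $S\,a_i(\lambda)$ is spanned by the $e_A$ with $\mathrm{co}(A)=\lambda$ whose submatrix formed by columns $i,i+1$ is generic. (3) The right ideal $o_{\lambda,\underline m}S$ is spanned by the orbits $e_A$ with $\mathrm{ro}(A)=\lambda$ and $A$ row generic with respect to $\underline m$.
   Context: Setup: Fix positive integers $n,r$ and a field $k$. $\Lambda(n,r)$: compositions of $r$ into $n$ nonnegative parts. $\Theta(n,r)$: $n\times n$ nonnegative integer matrices $A=(a_{ij})$ with entry sum $r$, with row/column-sum vectors $\mathrm{ro}(A),\mathrm{co}(A)$. For an $r$-dimensional $V$ (finite or algebraically closed field), $\mathcal F_\lambda$ denotes flags $0=V_0\subseteq\cdots\subseteq V_n=V$ with $\dim V_i/V_{i-1}=\lambda_i$; $GL(V)$-orbits $e_A$ on pairs of flags correspond to $A\in\Theta(n,r)$ via $a_{ij}=\dim(V_i\cap V'_j)-\dim(V_i\cap V'_{j-1}+V_{i-1}\cap V'_j)$. The $0$-Schur algebra $S_0(n,r)$ (specialization at $q=0$ of the $q$-Schur algebra, tensored with $k$) has basis $\{e_A\}$ with $e_Ae_B=0$ if $\mathrm{co}(A)\ne\mathrm{ro}(B)$, otherwise $e_Ae_B$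 is the unique open orbit among pairs $(f,h)$ with $(f,g)\in e_A,(g,h)\in e_B$ for some $g$. $k_\lambda=e_{\mathrm{diag}(\lambda)}$, $o_\lambda$ the open orbit in $\mathcal F_\lambda\times\mathcal F_\lambda$. For a decomposition $\underline p=(p_1,\dots,p_s)$ of $n$ (positive integers summing to $n$), $\lambda^i=(\lambda_{p_1+\cdots+p_{i-1}+1},\dots,\lambda_{p_1+\cdots+p_i})$ and $o_{\lambda,\underline p}=e_A$ with $A$ block diagonal (blocks of sizes $p_i$), $i$-th block the matrix of the open orbit $o_{\lambda^i}$, other entries $0$. $a_i(\lambda)=o_{\lambda,\underline m}$ where $\underline m=(1,\dots,1,2,1,\dots,1)$ has $2$ in position $i$. A matrix is generic if every $2\times2$ submatrix (rows $i<j$, columns $s<t$) satisfies $a_{is}a_{jt}=0$. For a decomposition $\underline m=(m_1,\dots,m_s)$, $A$ is column (resp. row) generic with respect to $\underline m$ if for each $i$ the submatrix formed by the columns (resp. rows) $m_1+\cdots+m_{i-1}+1,\dots,m_1+\cdots+m_i$ is generic. *)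

theory Defs
  imports Complex_Main "HOL-Library.Function_Algebras"
begin

type_synonym vect = "nat \<Rightarrow> complex"
type_synonym mat = "nat \<Rightarrow> nat \<Rightarrow> nat"
type_synonym comp = "nat \<Rightarrow> nat"

definition cscale :: "complex \<Rightarrow> vect \<Rightarrow> vect" where
  "cscale c v = (\<lambda>i. c * v i)"

definition csub :: "vect set \<Rightarrow> bool" where
  "csub U = module.subspace cscale U"

definition cdim :: "vect set \<Rightarrow> nat" where
  "cdim U = vector_space.dim cscale U"

definition Vsp :: "nat \<Rightarrow> vect set" where
  "Vsp r = {v. \<forall>i\<ge>r. v i = 0}"

definition ssum :: "vect set \<Rightarrow> vect set \<Rightarrow> vect set" where
  "ssum U W = {x + y |x y. x \<in> U \<and> y \<in> W}"

definition is_flag :: "nat \<Rightarrow> nat \<Rightarrow> comp \<Rightarrow> (nat \<Rightarrow> vect set) \<Rightarrow> bool" where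
  "is_flag n r lam F \<longleftrightarrow> F 0 = {0} \<and> F n = Vsp r \<and>
     (\<forall>i\<in>{1..n}. csub (F i) \<and> F (i - 1) \<subseteq> F i \<and> cdim (F i) = cdim (F (i - 1)) + lam i)"

definition relpos :: "nat \<Rightarrow> (nat \<Rightarrow> vect set) \<Rightarrow> (nat \<Rightarrow> vect set) \<Rightarrow> mat" where
  "relpos n F G = (\<lambda>i j. if i \<in> {1..n} \<and> j \<in> {1..n} then
      cdim (F i \<inter> G j) - cdim (ssum (F i \<inter> G (j - 1)) (F (i - 1) \<inter> G j)) else 0)"

definition Lam :: "nat \<Rightarrow> nat \<Rightarrow> comp set" where
  "Lam n r = {lam. (\<forall>i. lam i \<noteq> 0 \<longrightarrow> i \<in> {1..n}) \<and> (\<Sum>i=1..n. lam i) = r}"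

definition Theta :: "nat \<Rightarrow> nat \<Rightarrow> mat set" where
  "Theta n r = {A. (\<forall>i j. A i j \<noteq> 0 \<longrightarrow> i \<in> {1..n} \<and> j \<in> {1..n}) \<and>
                   (\<Sum>i=1..n. \<Sum>j=1..n. A i j) = r}"

definition ro :: "nat \<Rightarrow> mat \<Rightarrow> comp" where
  "ro n A = (\<lambda>i. \<Sum>j=1..n. A i j)"

definition co :: "nat \<Rightarrow> mat \<Rightarrow> comp" where
  "co n A = (\<lambda>j. \<Sum>i=1..n. A i j)"

definition diagm :: "comp \<Rightarrow> mat" where
  "diagm lam = (\<lambda>i j. if i = j then lam i else 0)"

text \<open>Dimension of the stabilizer in GL(V) of a pair of flags in relative position A;
  the orbit has dimension r^2 minus this, so the open orbit (maximal dimension)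
  is the one with minimal stabilizer dimension.\<close>
definition stabdim :: "nat \<Rightarrow> mat \<Rightarrow> nat" where
  "stabdim n A = (\<Sum>i=1..n. \<Sum>j=1..n. \<Sum>k=1..i. \<Sum>l=1..j. A i j * A k l)"

definition occurs :: "nat \<Rightarrow> nat \<Rightarrow> mat \<Rightarrow> mat \<Rightarrow> mat \<Rightarrow> bool" where
  "occurs n r A B C \<longleftrightarrow> (\<exists>F G H. is_flag n r (ro n A) F \<and> is_flag n r (co n A) G \<and>
      is_flag n r (co n B) H \<and> relpos n F G = A \<and> relpos n G H = B \<and> relpos n F H = C)"

definition gprod :: "nat \<Rightarrow> nat \<Rightarrow> mat \<Rightarrow> mat \<Rightarrow> mat" where
  "gprod n r A B = (THE C. occurs n r A B C \<and>
      (\<forall>C'. occurs n r A B C' \<and> C' \<noteq> C \<longrightarrow> stabdim n C < stabdim n C'))"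

definition open_orb :: "nat \<Rightarrow> comp \<Rightarrow> mat" where
  "open_orb n lam = (THE A. A \<in> Theta n (\<Sum>i=1..n. lam i) \<and> ro n A = lam \<and> co n A = lam \<and>
      (\<forall>A'. A' \<in> Theta n (\<Sum>i=1..n. lam i) \<and> ro n A' = lam \<and> co n A' = lam \<and> A' \<noteq> A
            \<longrightarrow> stabdim n A < stabdim n A'))"

definition S0 :: "nat \<Rightarrow> nat \<Rightarrow> (mat \<Rightarrow> 'k::field) set" where
  "S0 n r = {x. \<forall>A. x A \<noteq> 0 \<longrightarrow> A \<in> Theta n r}"

definition eorb :: "mat \<Rightarrow> (mat \<Rightarrow> 'k::field)" where
  "eorb A = (\<lambda>C. if C = A then 1 else 0)"

definition smult :: "nat \<Rightarrow> nat \<Rightarrow> (mat \<Rightarrow> 'k::field) \<Rightarrow> (mat \<Rightarrow> 'k) \<Rightarrow> (mat \<Rightarrow> 'k)" where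
  "smult n r x y = (\<lambda>C. \<Sum>A\<in>Theta n r. \<Sum>B\<in>Theta n r.
      (if co n A = ro n B \<and> gprod n r A B = C then x A * y B else 0))"

definition kspan :: "mat set \<Rightarrow> (mat \<Rightarrow> 'k::field) set" where
  "kspan T = {x. \<exists>c. x = (\<lambda>C. \<Sum>A\<in>T. c A * eorb A C)}"

definition is_decomp :: "nat \<Rightarrow> nat list \<Rightarrow> bool" where
  "is_decomp n p \<longleftrightarrow> (\<forall>x\<in>set p. 0 < x) \<and> sum_list p = n"

definition ps :: "nat list \<Rightarrow> nat \<Rightarrow> nat" where
  "ps p i = sum_list (take i p)"

definition inblock :: "nat list \<Rightarrow> nat \<Rightarrow> nat \<Rightarrow> bool" where
  "inblock p i a \<longleftrightarrow> ps p i < a \<and> a \<le> ps p (Suc i)"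

text \<open>lam^i, the i-th piece (0-based i) of lam w.r.t. p, as a composition with p!i parts.\<close>
definition piece :: "comp \<Rightarrow> nat list \<Rightarrow> nat \<Rightarrow> comp" where
  "piece lam p i = (\<lambda>j. if 1 \<le> j \<and> j \<le> p ! i then lam (ps p i + j) else 0)"

definition o_blk :: "comp \<Rightarrow> nat list \<Rightarrow> mat" where
  "o_blk lam p = (\<lambda>a b. \<Sum>i<length p. if inblock p i a \<and> inblock p i b
      then open_orb (p ! i) (piece lam p i) (a - ps p i) (b - ps p i) else 0)"

definition mdec :: "nat \<Rightarrow> nat \<Rightarrow> nat list" where
  "mdec n i = replicate (i - 1) 1 @ [2] @ replicate (n - i - 1) 1"

definition a_orb :: "nat \<Rightarrow> comp \<Rightarrow> nat \<Rightarrow> mat" where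
  "a_orb n lam i = o_blk lam (mdec n i)"

definition generic_sub :: "nat set \<Rightarrow> nat set \<Rightarrow> mat \<Rightarrow> bool" where
  "generic_sub R J A \<longleftrightarrow> (\<forall>i\<in>R. \<forall>j\<in>R. \<forall>s\<in>J. \<forall>t\<in>J. i < j \<and> s < t \<longrightarrow> A i s * A j t = 0)"

definition col_generic :: "nat \<Rightarrow> nat list \<Rightarrow> mat \<Rightarrow> bool" where
  "col_generic n p A \<longleftrightarrow> (\<forall>i<length p. generic_sub {1..n} {ps p i + 1..ps p (Suc i)} A)"

definition row_generic :: "nat \<Rightarrow> nat list \<Rightarrow> mat \<Rightarrow> bool" where
  "row_generic n p A \<longleftrightarrow> (\<forall>i<length p. generic_sub {ps p i + 1..ps p (Suc i)} {1..n} A)"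

end

theory Submission
  imports Defs
begin


interpretation cs: vector_space cscale
  by unfold_locales (auto simp: cscale_def fun_eq_iff algebra_simps)

lemma csub_cs: "csub = cs.subspace" unfolding csub_def ..
lemma cdim_cs: "cdim = cs.dim" unfolding cdim_def ..

lemma sum_app: "(\<Sum>a\<in>A. f a) x = (\<Sum>a\<in>A. f a x)"
  by (induct A rule: infinite_finite_induct) auto

lemma mult_if_delta: "(x::complex) * (if P then 1 else 0) = (if P then x else 0)" by simp

definition ev :: "nat \<Rightarrow> vect" where "ev k = (\<lambda>i. if i = k then 1 else 0)"
definition Coord :: "nat set \<Rightarrow> vect set" where "Coord S = {v. \<forall>i. i \<notin> S \<longrightarrow> v i = 0}"

lemma Vsp_Coord: "Vsp r = Coord {..<r}"
  unfolding Vsp_def Coord_def by auto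

lemma Coord_Int: "Coord S \<inter> Coord T = Coord (S \<inter> T)"
  unfolding Coord_def by auto

lemma Coord_mono: "S \<subseteq> T \<Longrightarrow> Coord S \<subseteq> Coord T"
  unfolding Coord_def by auto

lemma ssum_Coord: "ssum (Coord S) (Coord T) = Coord (S \<union> T)"
proof
  show "ssum (Coord S) (Coord T) \<subseteq> Coord (S \<union> T)"
    unfolding ssum_def Coord_def by auto
  show "Coord (S \<union> T) \<subseteq> ssum (Coord S) (Coord T)"
  proof
    fix v assume v: "v \<in> Coord (S \<union> T)"
    let ?x = "\<lambda>i. if i \<in> S then v i else 0"
    let ?y = "\<lambda>i. if i \<in> S then 0 else v i"
    have "v = ?x + ?y" by (auto simp: fun_eq_iff)
    moreover have "?x \<in> Coord S" "?y \<in> Coord T" using v unfolding Coord_def by auto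
    ultimately show "v \<in> ssum (Coord S) (Coord T)" unfolding ssum_def by blast
  qed
qed

lemma csub_Coord: "csub (Coord S)"
  unfolding csub_cs cs.subspace_def Coord_def by (auto simp: cscale_def)

lemma span_ev: assumes "finite S" shows "cs.span (ev ` S) = Coord S"
proof
  show "cs.span (ev ` S) \<subseteq> Coord S"
    by (rule cs.span_minimal[OF _ csub_Coord[unfolded csub_cs]]) (auto simp: ev_def Coord_def)
  show "Coord S \<subseteq> cs.span (ev ` S)"
  proof
    fix v assume v: "v \<in> Coord S"
    have "v = (\<Sum>k\<in>S. cscale (v k) (ev k))"
    proof
      fix i show "v i = (\<Sum>k\<in>S. cscale (v k) (ev k)) i"
        using v assms by (auto simp: sum_app cscale_def ev_def Coord_def if_distrib cong: if_cong)
    qed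
    also have "\<dots> \<in> cs.span (ev ` S)"
      by (intro cs.span_sum cs.span_scale cs.span_base) auto
    finally show "v \<in> cs.span (ev ` S)" .
  qed
qed

lemma inj_ev: "inj ev"
  unfolding inj_def ev_def fun_eq_iff by (metis one_neq_zero)

lemma indep_ev: assumes "finite S" shows "cs.independent (ev ` S)"
proof
  assume "cs.dependent (ev ` S)"
  then obtain u where u: "\<exists>v\<in>ev ` S. u v \<noteq> 0" "(\<Sum>v\<in>ev ` S. cscale (u v) v) = 0"
    using cs.dependent_finite assms by blast
  then obtain k where k: "k \<in> S" "u (ev k) \<noteq> 0" by auto
  have "(\<Sum>v\<in>ev ` S. cscale (u v) v) k = (\<Sum>j\<in>S. cscale (u (ev j)) (ev j) k)"
    by (simp add: sum_app sum.reindex inj_on_def inj_ev[unfolded inj_def])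
  also have "\<dots> = u (ev k)"
    using k assms by (simp add: cscale_def ev_def mult_if_delta)
  finally show False using u k by simp
qed

lemma cdim_Coord: assumes "finite S" shows "cdim (Coord S) = card S"
proof -
  have "cdim (Coord S) = card (ev ` S)"
    unfolding cdim_cs span_ev[OF assms, symmetric]
    by (rule cs.dim_span_eq_card_independent[OF indep_ev[OF assms]])
  also have "\<dots> = card S" by (rule card_image) (meson inj_ev inj_on_subset subset_UNIV)
  finally show ?thesis .
qed

lemma csub_Vsp: "csub (Vsp N)" by (simp add: Vsp_Coord csub_Coord)

lemma span_Vsp: "cs.span (ev ` {..<N}) = Vsp N"
  by (simp add: Vsp_Coord span_ev)

lemma indep_bnd: "cs.independent X \<Longrightarrow> X \<subseteq> Vsp N \<Longrightarrow> finite X \<and> card X \<le> N"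
proof -
  assume a: "cs.independent X" "X \<subseteq> Vsp N"
  have "finite X \<and> card X \<le> card (ev ` {..<N})"
    by (rule cs.independent_span_bound) (use a span_Vsp[of N] in auto)
  moreover have "card (ev ` {..<N}) = N"
    by (subst card_image) (auto intro: inj_on_subset[OF inj_ev])
  ultimately show ?thesis by simp
qed

lemma basis_fd:
  assumes "csub U" "U \<subseteq> Vsp N"
  obtains B where "finite B" "B \<subseteq> U" "cs.independent B" "cs.span B = U" "card B = cdim U"
proof -
  obtain B where B: "B \<subseteq> U" "cs.independent B" "U \<subseteq> cs.span B" "card B = cs.dim U"
    by (rule cs.basis_exists)
  have "cs.span B \<subseteq> U" by (rule cs.span_minimal[OF B(1)]) (use assms(1) in \<open>simp add: csub_cs\<close>)
  moreover have "finite B" using indep_bnd[of B N] B assms by auto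
  ultimately show ?thesis using that B by (simp add: cdim_cs)
qed

lemma indep_le_dim:
  assumes "X \<subseteq> U" "cs.independent X" "U \<subseteq> Vsp N"
  shows "card X \<le> cdim U"
proof -
  obtain C where C: "X \<subseteq> C" "C \<subseteq> U" "cs.independent C" "U \<subseteq> cs.span C"
    using cs.maximal_independent_subset_extend assms by blast
  have "finite C" using indep_bnd[of C N] C assms by auto
  moreover have "card C = cdim U" using cs.basis_card_eq_dim[of C U] C by (simp add: cdim_cs)
  ultimately show ?thesis using C card_mono by metis
qed

lemma dim_mono':
  assumes "U \<subseteq> W" "csub U" "W \<subseteq> Vsp N"
  shows "cdim U \<le> cdim W"
proof -
  obtain B where "finite B" "B \<subseteq> U" "cs.independent B" "cs.span B = U" "card B = cdim U"
    using basis_fd[OF assms(2) subset_trans[OF assms(1) assms(3)]] by blast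
  then show ?thesis using indep_le_dim[of B W N] assms by auto
qed

lemma dim_le_N: "csub U \<Longrightarrow> U \<subseteq> Vsp N \<Longrightarrow> cdim U \<le> N"
  using dim_mono'[of U "Vsp N" N] cdim_Coord[of "{..<N}"] by (simp add: Vsp_Coord)

lemma dim_eq_sub:
  assumes "csub U" "csub W" "U \<subseteq> W" "W \<subseteq> Vsp N" "cdim W \<le> cdim U"
  shows "U = W"
proof (rule ccontr)
  assume "U \<noteq> W"
  then obtain w where w: "w \<in> W" "w \<notin> U" using assms by auto
  obtain B where B: "finite B" "B \<subseteq> U" "cs.independent B" "cs.span B = U" "card B = cdim U"
    using basis_fd[OF assms(1) subset_trans[OF assms(3) assms(4)]] by blast
  have "cs.independent (insert w B)" using B w cs.independent_insert by auto
  moreover have "insert w B \<subseteq> W" using B w assms by auto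
  ultimately have "card (insert w B) \<le> cdim W" using indep_le_dim assms by blast
  moreover have "card (insert w B) = cdim U + 1" using B w by (auto simp add: card_insert_if)
  ultimately show False using assms
    by (metis (no_types) Suc_eq_plus1 B(1) B(4) card_insert_disjoint B(5) not_less_eq_eq w(2) subsetD)
qed

lemma dim_zero: "cdim {0} = 0"
  using cs.dim_eq_card[of "{}" "{0}"] cs.independent_empty by (simp add: cdim_cs cs.span_empty)

lemma dim_line: "v \<noteq> 0 \<Longrightarrow> cdim (cs.span {v}) = 1"
  by (simp add: cdim_cs cs.dim_eq_card_independent)

lemma csub_ssum: "csub U \<Longrightarrow> csub W \<Longrightarrow> csub (ssum U W)"
  unfolding csub_cs ssum_def by (rule cs.subspace_sums)

lemma csub_Int: "csub U \<Longrightarrow> csub W \<Longrightarrow> csub (U \<inter> W)"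
  unfolding csub_cs by (rule cs.subspace_inter)

lemma ssum_le: "csub W \<Longrightarrow> U \<subseteq> W \<Longrightarrow> U' \<subseteq> W \<Longrightarrow> ssum U U' \<subseteq> W"
  unfolding csub_cs ssum_def using cs.subspace_add by blast

lemma ssum_ge1: "csub U' \<Longrightarrow> U \<subseteq> ssum U U'"
proof
  fix x assume "csub U'" "x \<in> U"
  then have "x = x + 0 \<and> x \<in> U \<and> 0 \<in> U'" unfolding csub_cs using cs.subspace_0 by auto
  then show "x \<in> ssum U U'" unfolding ssum_def by blast
qed

lemma ssum_ge2: "csub U \<Longrightarrow> U' \<subseteq> ssum U U'"
  unfolding csub_cs ssum_def using cs.subspace_0 by force

lemma ssum_comm: "ssum U W = ssum W U"
  unfolding ssum_def by (metis (no_types, lifting) add.commute)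

lemma indep_explicit_fin:
  "finite B \<Longrightarrow> cs.independent B \<longleftrightarrow> (\<forall>c. (\<Sum>v\<in>B. cscale (c v) v) = 0 \<longrightarrow> (\<forall>v\<in>B. c v = 0))"
  using cs.dependent_finite by blast

lemma grassmann:
  assumes SS: "csub S" and ST: "csub T" and SN: "S \<subseteq> Vsp N" and TN: "T \<subseteq> Vsp N"
  shows "cdim (ssum S T) + cdim (S \<inter> T) = cdim S + cdim T"
proof -
  have sS: "cs.subspace S" and sT: "cs.subspace T" using SS ST by (auto simp: csub_cs)
  obtain B where B: "B \<subseteq> S \<inter> T" "S \<inter> T \<subseteq> cs.span B"
             and indB: "cs.independent B"
             and cardB: "card B = cs.dim (S \<inter> T)"
    by (rule cs.basis_exists)
  then obtain C D where "B \<subseteq> C" "C \<subseteq> S" "cs.independent C" "S \<subseteq> cs.span C"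
                    and "B \<subseteq> D" "D \<subseteq> T" "cs.independent D" "T \<subseteq> cs.span D"
    using cs.maximal_independent_subset_extend
    by (metis Int_subset_iff \<open>B \<subseteq> S \<inter> T\<close> indB)
  then have "finite B" "finite C" "finite D"
    using indep_bnd[of B N] indep_bnd[of C N] indep_bnd[of D N] indB SN TN by auto
  have Beq: "B = C \<inter> D"
  proof (rule cs.spanning_subset_independent [symmetric])
    show "cs.independent (C \<inter> D)"
      by (meson \<open>cs.independent C\<close> cs.independent_mono inf.cobounded1)
  qed (use B \<open>C \<subseteq> S\<close> \<open>D \<subseteq> T\<close> \<open>B \<subseteq> C\<close> \<open>B \<subseteq> D\<close> in auto)
  then have Deq: "D = B \<union> (D - C)"
    by blast
  have CUD: "C \<union> D \<subseteq> ssum S T"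
    using ssum_ge1[OF ST, of S] ssum_ge2[OF SS, of T] \<open>C \<subseteq> S\<close> \<open>D \<subseteq> T\<close> by blast
  have "a v = 0" if 0: "(\<Sum>v\<in>C. cscale (a v) v) + (\<Sum>v\<in>D - C. cscale (a v) v) = 0"
                 and v: "v \<in> C \<union> (D-C)" for a v
  proof -
    have CsS: "\<And>x. x \<in> C \<Longrightarrow> cscale (a x) x \<in> S"
      using \<open>C \<subseteq> S\<close> sS cs.subspace_scale by auto
    have eq: "(\<Sum>v\<in>D - C. cscale (a v) v) = - (\<Sum>v\<in>C. cscale (a v) v)"
      using that add_eq_0_iff by blast
    have "(\<Sum>v\<in>D - C. cscale (a v) v) \<in> S"
      by (simp add: eq CsS sS cs.subspace_neg cs.subspace_sum)
    moreover have "(\<Sum>v\<in>D - C. cscale (a v) v) \<in> T"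
      apply (rule cs.subspace_sum [OF sT])
      by (meson DiffD1 \<open>D \<subseteq> T\<close> sT subset_eq cs.subspace_def)
    ultimately have "(\<Sum>v \<in> D-C. cscale (a v) v) \<in> cs.span B"
      using B by blast
    then obtain e where e: "(\<Sum>v\<in>B. cscale (e v) v) = (\<Sum>v \<in> D-C. cscale (a v) v)"
      using cs.span_finite [OF \<open>finite B\<close>] by force
    define cc where "cc x = (if x \<in> B then a x + e x else a x)" for x
    have [simp]: "C \<inter> B = B" "D \<inter> B = B" "C \<inter> - B = C-D" "B \<inter> (D - C) = {}"
      using \<open>B \<subseteq> C\<close> \<open>B \<subseteq> D\<close> Beq by blast+
    have f2: "(\<Sum>v\<in>C \<inter> D. cscale (e v) v) = (\<Sum>v\<in>D - C. cscale (a v) v)"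
      using Beq e by presburger
    have f3: "(\<Sum>v\<in>C \<union> D. cscale (a v) v) = (\<Sum>v\<in>C - D. cscale (a v) v) + (\<Sum>v\<in>D - C. cscale (a v) v) + (\<Sum>v\<in>C \<inter> D. cscale (a v) v)"
      using \<open>finite C\<close> \<open>finite D\<close> sum.union_diff2 by blast
    have f4: "(\<Sum>v\<in>C \<union> (D - C). cscale (a v) v) = (\<Sum>v\<in>C. cscale (a v) v) + (\<Sum>v\<in>D - C. cscale (a v) v)"
      by (meson Diff_disjoint \<open>finite C\<close> \<open>finite D\<close> finite_Diff sum.union_disjoint)
    have "(\<Sum>v\<in>C. cscale (cc v) v) = 0"
      using 0 f2 f3 f4
      apply (simp add: cc_def Beq \<open>finite C\<close> sum.If_cases algebra_simps sum.distrib
          if_distrib if_distribR cs.scale_left_distrib)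
      apply (simp add: add.commute add.left_commute diff_eq)
      done
    then have "\<And>v. v \<in> C \<Longrightarrow> cc v = 0"
      using indep_explicit_fin \<open>cs.independent C\<close> \<open>finite C\<close> by blast
    then have C0: "\<And>v. v \<in> C - B \<Longrightarrow> a v = 0"
      by (simp add: cc_def Beq) meson
    then have [simp]: "(\<Sum>x\<in>C - B. cscale (a x) x) = 0"
      by simp
    have "(\<Sum>x\<in>C. cscale (a x) x) = (\<Sum>x\<in>B. cscale (a x) x)"
    proof -
      have "C - D = C - B"
        using Beq by blast
      then show ?thesis
        using Beq \<open>(\<Sum>x\<in>C - B. cscale (a x) x) = 0\<close> f3 f4 by auto
    qed
    with 0 have Dcc0: "(\<Sum>v\<in>D. cscale (a v) v) = 0"
      by (subst Deq) (simp add: \<open>finite B\<close> \<open>finite D\<close> sum_Un)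
    then have D0: "\<And>v. v \<in> D \<Longrightarrow> a v = 0"
      using indep_explicit_fin \<open>cs.independent D\<close> \<open>finite D\<close> by blast
    show ?thesis
      using v C0 D0 Beq by blast
  qed
  then have "cs.independent (C \<union> (D - C))"
    using indep_explicit_fin[of "C \<union> (D - C)"] \<open>finite C\<close> \<open>finite D\<close>
    by (simp add: sum_Un del: Un_Diff_cancel)
  then have indCUD: "cs.independent (C \<union> D)" by simp
  have "cs.dim (S \<inter> T) = card B"
    by (rule cs.dim_unique [OF B indB refl])
  moreover have "cs.dim S = card C"
    by (metis \<open>C \<subseteq> S\<close> \<open>cs.independent C\<close> \<open>S \<subseteq> cs.span C\<close> cs.basis_card_eq_dim)
  moreover have "cs.dim T = card D"
    by (metis \<open>D \<subseteq> T\<close> \<open>cs.independent D\<close> \<open>T \<subseteq> cs.span D\<close> cs.basis_card_eq_dim)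
  moreover have "cs.dim (ssum S T) = card(C \<union> D)"
  proof -
    have *: "\<And>x y. \<lbrakk>x \<in> S; y \<in> T\<rbrakk> \<Longrightarrow> x + y \<in> cs.span (C \<union> D)"
      by (meson \<open>S \<subseteq> cs.span C\<close> \<open>T \<subseteq> cs.span D\<close> cs.span_add cs.span_mono subsetCE sup.cobounded1 sup.cobounded2)
    show ?thesis
      by (rule cs.dim_unique [OF CUD _ indCUD refl]) (auto simp: ssum_def intro: *)
  qed
  ultimately show ?thesis
    using \<open>B = C \<inter> D\<close> [symmetric] \<open>finite C\<close> \<open>finite D\<close>
    by (simp add: cdim_cs card_Un_Int)
qed


lemma cscale_inv: "c \<noteq> 0 \<Longrightarrow> cscale (inverse c) (cscale c w) = w"
  by (simp add: cscale_def fun_eq_iff)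

lemma avoid:
  assumes W: "csub W" and fin: "finite VV"
    and VV: "\<And>V. V \<in> VV \<Longrightarrow> csub V \<and> V \<subseteq> W \<and> V \<noteq> W"
  shows "\<exists>w\<in>W. \<forall>V\<in>VV. w \<notin> V"
  using fin VV
proof (induct VV rule: finite_induct)
  case empty
  then show ?case using W cs.subspace_0 by (auto simp: csub_cs)
next
  case (insert V0 VV)
  then obtain w where w: "w \<in> W" "\<forall>V\<in>VV. w \<notin> V" by blast
  show ?case
  proof (cases "w \<in> V0")
    case False then show ?thesis using w by blast
  next
    case True
    have V0: "csub V0" "V0 \<subseteq> W" "V0 \<noteq> W" using insert by auto
    then obtain u where u: "u \<in> W" "u \<notin> V0" by blast
    define f where "f t = u + cscale (of_nat t) w" for t :: nat
    have fW: "f t \<in> W" for t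
      using W u w unfolding f_def csub_cs by (simp add: cs.subspace_add cs.subspace_scale)
    have fV0: "f t \<notin> V0" for t
    proof
      assume "f t \<in> V0"
      then have "f t - cscale (of_nat t) w \<in> V0"
        using V0 True unfolding csub_cs by (simp add: cs.subspace_diff cs.subspace_scale)
      then show False using u by (simp add: f_def)
    qed
    show ?thesis
    proof (rule ccontr)
      assume "\<not> ?thesis"
      then have "\<forall>t. \<exists>V\<in>VV. f t \<in> V" using fW fV0 by blast
      then obtain g where g: "\<And>t. g t \<in> VV \<and> f t \<in> g t" by metis
      have "\<not> inj_on g {0..card VV}"
      proof
        assume "inj_on g {0..card VV}"
        then have "card {0..card VV} \<le> card VV"
          using card_inj_on_le[of g "{0..card VV}" VV] g insert(1) by auto
        then show False by simp
      qed
      then obtain t1 t2 where t: "t1 \<noteq> t2" "g t1 = g t2" unfolding inj_on_def by blast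
      let ?V = "g t1"
      have sV: "cs.subspace ?V" using g insert(4) by (auto simp: csub_cs)
      have "f t1 - f t2 \<in> ?V" using g t sV by (metis cs.subspace_diff)
      moreover have "f t1 - f t2 = cscale (of_nat t1 - of_nat t2) w"
        by (simp add: f_def cscale_def fun_eq_iff algebra_simps)
      ultimately have "cscale (inverse (of_nat t1 - of_nat t2)) (cscale (of_nat t1 - of_nat t2) w) \<in> ?V"
        using sV cs.subspace_scale by metis
      then have "w \<in> ?V" using t(1) by (subst (asm) cscale_inv) auto
      then show False using w g by blast
    qed
  qed
qed

lemma ssum_assoc: "ssum U (ssum H L) = ssum (ssum U H) L"
  unfolding ssum_def by (auto, metis add.assoc, metis add.assoc)

lemma csub_span: "csub (cs.span X)"
  by (simp add: csub_cs cs.subspace_span)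

lemma line_meet: assumes "csub X" "v \<notin> X" shows "X \<inter> cs.span {v} = {0}"
proof
  show "X \<inter> cs.span {v} \<subseteq> {0}"
  proof
    fix x assume x: "x \<in> X \<inter> cs.span {v}"
    then obtain c where c: "x = cscale c v" by (auto simp: cs.span_singleton)
    show "x \<in> {0}"
    proof (cases "c = 0")
      case True then show ?thesis using c by (simp add: cscale_def fun_eq_iff zero_fun_def)
    next
      case False
      then have "cscale (inverse c) x \<in> X" using x assms(1) by (auto simp: csub_cs cs.subspace_scale)
      then have "v \<in> X" using c False cscale_inv by simp
      then show ?thesis using assms by simp
    qed
  qed
  show "{0} \<subseteq> X \<inter> cs.span {v}" using assms(1) cs.subspace_0 cs.span_zero by (auto simp: csub_cs)
qed

lemma span_line_le: "csub W \<Longrightarrow> v \<in> W \<Longrightarrow> cs.span {v} \<subseteq> W"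
  by (rule cs.span_minimal) (auto simp: csub_cs)

lemma span_line_bnd: "v \<in> Vsp N \<Longrightarrow> cs.span {v} \<subseteq> Vsp N"
  using span_line_le csub_Vsp by blast

lemma add_line_dim:
  assumes "csub X" "X \<subseteq> Vsp N" "v \<in> Vsp N" "v \<notin> X"
  shows "cdim (ssum X (cs.span {v})) = cdim X + 1"
proof -
  have "v \<noteq> 0" using assms(1,4) cs.subspace_0 by (auto simp: csub_cs)
  then show ?thesis
    using grassmann[OF assms(1) csub_span assms(2) span_line_bnd[OF assms(3)]] line_meet[OF assms(1,4)]
      dim_zero dim_line by simp
qed

context
  fixes N :: nat and B W :: "vect set" and UU :: "vect set set"
  assumes B: "csub B" and W: "csub W" and BW: "B \<subseteq> W" and WN: "W \<subseteq> Vsp N"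
    and UUf: "finite UU" and UU: "\<And>U. U \<in> UU \<Longrightarrow> csub U \<and> B \<subseteq> U \<and> U \<subseteq> W"
begin

definition good :: "vect set \<Rightarrow> bool" where
  "good H \<longleftrightarrow> csub H \<and> B \<subseteq> H \<and> H \<subseteq> W \<and>
     (\<forall>U\<in>UU. cdim (U \<inter> H) = max (cdim B) (cdim U + cdim H - cdim W))"

lemma good_B: "good B"
proof -
  have "cdim U \<le> cdim W" if "U \<in> UU" for U using UU[OF that] dim_mono' WN by blast
  moreover have "U \<inter> B = B" if "U \<in> UU" for U using UU[OF that] by blast
  moreover have "cdim B \<le> cdim W" using dim_mono' BW B WN by blast
  ultimately show ?thesis unfolding good_def using B BW by fastforce
qed

lemma good_step:
  assumes H: "good H" and lt: "cdim H < cdim W"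
  shows "\<exists>H'. good H' \<and> H \<subseteq> H' \<and> cdim H' = cdim H + 1"
proof -
  have sH: "csub H" "B \<subseteq> H" "H \<subseteq> W" using H unfolding good_def by auto
  have HN: "H \<subseteq> Vsp N" using sH WN by auto
  let ?VV = "insert H ((\<lambda>U. ssum U H) ` {U\<in>UU. ssum U H \<noteq> W})"
  have "\<exists>w\<in>W. \<forall>V\<in>?VV. w \<notin> V"
  proof (rule avoid[OF W])
    show "finite ?VV" using UUf by auto
    fix V assume "V \<in> ?VV"
    then show "csub V \<and> V \<subseteq> W \<and> V \<noteq> W"
    proof
      assume "V = H" then show ?thesis using sH lt by auto
    next
      assume "V \<in> (\<lambda>U. ssum U H) ` {U\<in>UU. ssum U H \<noteq> W}"
      then obtain U where "U \<in> UU" "V = ssum U H" "ssum U H \<noteq> W" by auto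
      then show ?thesis using UU[of U] sH W by (auto simp: csub_ssum ssum_le)
    qed
  qed
  then obtain v where v: "v \<in> W" "v \<notin> H" "\<And>U. U \<in> UU \<Longrightarrow> ssum U H \<noteq> W \<Longrightarrow> v \<notin> ssum U H"
    by blast
  have vN: "v \<in> Vsp N" using v WN by auto
  define H' where "H' = ssum H (cs.span {v})"
  have sH': "csub H'" unfolding H'_def using sH csub_span csub_ssum by blast
  have HH': "H \<subseteq> H'" unfolding H'_def using ssum_ge1[OF csub_span] .
  have H'W: "H' \<subseteq> W" unfolding H'_def using ssum_le[OF W sH(3) span_line_le[OF W v(1)]] .
  have dH': "cdim H' = cdim H + 1" unfolding H'_def using add_line_dim[OF sH(1) HN vN v(2)] .
  have H'N: "H' \<subseteq> Vsp N" using H'W WN by auto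
  have "cdim (U \<inter> H') = max (cdim B) (cdim U + cdim H' - cdim W)" if U: "U \<in> UU" for U
  proof -
    have sU: "csub U" "B \<subseteq> U" "U \<subseteq> W" using UU[OF U] by auto
    have UN: "U \<subseteq> Vsp N" using sU WN by auto
    have IH: "cdim (U \<inter> H) = max (cdim B) (cdim U + cdim H - cdim W)" using H U unfolding good_def by auto
    have g1: "cdim (ssum U H) + cdim (U \<inter> H) = cdim U + cdim H" using grassmann[OF sU(1) sH(1) UN HN] .
    have g2: "cdim (ssum U H') + cdim (U \<inter> H') = cdim U + cdim H'" using grassmann[OF sU(1) sH' UN H'N] .
    have BUH': "cdim B \<le> cdim (U \<inter> H')"
      using dim_mono'[of B "U \<inter> H'" N] B sU sH' HH' sH(2) H'N by blast
    have sUH: "csub (ssum U H)" "ssum U H \<subseteq> W" using sU sH W by (auto simp: csub_ssum ssum_le)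
    show ?thesis
    proof (cases "ssum U H = W")
      case True
      have "ssum U H \<subseteq> ssum U H'" unfolding ssum_def using HH' by blast
      moreover have "ssum U H' \<subseteq> W" using ssum_le[OF W sU(3) H'W] .
      ultimately have "ssum U H' = W" using True by auto
      then show ?thesis using g2 BUH' by auto
    next
      case False
      have "ssum U H' = ssum (ssum U H) (cs.span {v})" unfolding H'_def by (rule ssum_assoc)
      moreover have "cdim (ssum (ssum U H) (cs.span {v})) = cdim (ssum U H) + 1"
        using add_line_dim[OF sUH(1) _ vN v(3)[OF U False]] sUH(2) WN by auto
      ultimately have e: "cdim (ssum U H') = cdim (ssum U H) + 1" by simp
      have "cdim (ssum U H) < cdim W"
      proof (rule ccontr)
        assume "\<not> ?thesis"
        then have "ssum U H = W" using dim_eq_sub[OF sUH(1) W sUH(2) WN] by auto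
        then show False using False by simp
      qed
      then show ?thesis using e g1 g2 IH dH' by auto
    qed
  qed
  then have "good H'" unfolding good_def using sH' H'W HH' sH by auto
  then show ?thesis using HH' dH' by blast
qed

lemma good_chain:
  "k \<le> cdim W - cdim B \<Longrightarrow> \<exists>Hs. Hs 0 = B \<and> (\<forall>j<k. Hs j \<subseteq> Hs (Suc j)) \<and>
      (\<forall>j\<le>k. good (Hs j) \<and> cdim (Hs j) = cdim B + j)"
proof (induct k)
  case 0
  then show ?case using good_B by (intro exI[of _ "\<lambda>_. B"]) auto
next
  case (Suc k)
  then obtain Hs where Hs: "Hs 0 = B" "\<forall>j<k. Hs j \<subseteq> Hs (Suc j)"
      "\<forall>j\<le>k. good (Hs j) \<and> cdim (Hs j) = cdim B + j" by auto
  have "cdim (Hs k) < cdim W" using Hs(3) Suc(2) by auto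
  then obtain H' where H': "good H'" "Hs k \<subseteq> H'" "cdim H' = cdim (Hs k) + 1"
    using good_step Hs(3) by blast
  show ?case
    by (rule exI[of _ "Hs(Suc k := H')"]) (use Hs H' in \<open>auto simp: less_Suc_eq le_Suc_eq\<close>)
qed

end


definition D :: "mat \<Rightarrow> nat \<Rightarrow> nat \<Rightarrow> nat" where
  "D M i j = (\<Sum>k=1..i. \<Sum>l=1..j. M k l)"

definition Rect :: "mat \<Rightarrow> nat \<Rightarrow> nat \<Rightarrow> nat \<Rightarrow> nat \<Rightarrow> nat" where
  "Rect M i1 i2 j1 j2 = (\<Sum>k\<in>{i1<..i2}. \<Sum>l\<in>{j1<..j2}. M k l)"

lemma D_0_1[simp]: "D M 0 j = 0" by (simp add: D_def)
lemma D_0_2[simp]: "D M i 0 = 0" by (simp add: D_def)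

lemma sum_split_ivl:
  assumes "a \<le> (b::nat)" shows "sum g {1..b} = sum g {1..a} + sum g {a<..b}"
proof -
  have "{1..b} = {1..a} \<union> {a<..b}" using assms by auto
  moreover have "{1..a} \<inter> {a<..b} = {}" by auto
  ultimately show ?thesis by (simp add: sum.union_disjoint)
qed

lemma sum_split_ivl2:
  assumes "a \<le> b" "b \<le> (c::nat)" shows "sum g {a<..c} = sum g {a<..b} + sum g {b<..c}"
proof -
  have "{a<..c} = {a<..b} \<union> {b<..c}" using assms by auto
  moreover have "{a<..b} \<inter> {b<..c} = {}" by auto
  ultimately show ?thesis by (simp add: sum.union_disjoint)
qed

lemma Rect_D:
  assumes "i1 \<le> i2" "j1 \<le> j2"
  shows "int (Rect M i1 i2 j1 j2) = int (D M i2 j2) - D M i1 j2 - D M i2 j1 + D M i1 j1"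
proof -
  have a: "D M i j2 = D M i j1 + (\<Sum>k=1..i. \<Sum>l\<in>{j1<..j2}. M k l)" for i
  proof -
    have "(\<Sum>k=1..i. \<Sum>l=1..j2. M k l) = (\<Sum>k=1..i. (\<Sum>l=1..j1. M k l) + (\<Sum>l\<in>{j1<..j2}. M k l))"
      by (rule sum.cong, rule refl, rule sum_split_ivl[OF assms(2)])
    then show ?thesis unfolding D_def by (simp add: sum.distrib)
  qed
  have b: "(\<Sum>k=1..i2. f k) = (\<Sum>k=1..i1. f k) + (\<Sum>k\<in>{i1<..i2}. f k)" for f :: "nat \<Rightarrow> nat"
    using sum_split_ivl[OF assms(1)] .
  have c: "D M i2 j1 = D M i1 j1 + (\<Sum>k\<in>{i1<..i2}. \<Sum>l=1..j1. M k l)"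
    unfolding D_def using b .
  show ?thesis using a[of i2] a[of i1] c b[of "\<lambda>k. \<Sum>l\<in>{j1<..j2}. M k l"]
    unfolding Rect_def by simp
qed

lemma Rect_entry: "Rect M (i - 1) i (j - 1) j = (if i \<ge> 1 \<and> j \<ge> 1 then M i j else 0)"
proof -
  have "{i - 1<..i} = (if i \<ge> 1 then {i} else {})" by auto
  moreover have "{j - 1<..j} = (if j \<ge> 1 then {j} else {})" by auto
  ultimately show ?thesis unfolding Rect_def by auto
qed

lemma D_entry:
  assumes "1 \<le> i" "1 \<le> j"
  shows "int (M i j) = int (D M i j) - D M (i - 1) j - D M i (j - 1) + D M (i - 1) (j - 1)"
  using Rect_D[of "i - 1" i "j - 1" j M] Rect_entry[of M i j] assms by simp

lemma D_Suc1: "D M (Suc i) j = D M i j + (\<Sum>l=1..j. M (Suc i) l)"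
  by (simp add: D_def)

lemma D_Suc2: "D M i (Suc j) = D M i j + (\<Sum>k=1..i. M k (Suc j))"
  by (simp add: D_def sum.distrib)

lemma D_eqI:
  fixes d :: "nat \<Rightarrow> nat \<Rightarrow> int"
  assumes "\<And>j. d 0 j = 0" "\<And>i. d i 0 = 0"
    and "\<And>i j. 1 \<le> i \<Longrightarrow> i \<le> n \<Longrightarrow> 1 \<le> j \<Longrightarrow> j \<le> n \<Longrightarrow>
           int (M i j) = d i j - d (i - 1) j - d i (j - 1) + d (i - 1) (j - 1)"
  shows "i \<le> n \<Longrightarrow> j \<le> n \<Longrightarrow> d i j = int (D M i j)"
proof (induct i arbitrary: j)
  case 0 then show ?case using assms by simp
next
  case (Suc i)
  show ?case using Suc(3)
  proof (induct j)
    case 0 then show ?case using assms by simp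
  next
    case (Suc j)
    have "int (D M (Suc i) (Suc j)) = int (D M i (Suc j)) + int (D M (Suc i) j) - int (D M i j) + int (M (Suc i) (Suc j))"
      using D_entry[of "Suc i" "Suc j" M] by simp
    also have "\<dots> = d i (Suc j) + d (Suc i) j - d i j + M (Suc i) (Suc j)"
      using Suc.prems \<open>Suc i \<le> n\<close> Suc.hyps \<open>\<And>j. i \<le> n \<Longrightarrow> j \<le> n \<Longrightarrow> d i j = int (D M i j)\<close> by auto
    also have "\<dots> = d (Suc i) (Suc j)"
      using assms(3)[of "Suc i" "Suc j"] Suc.prems \<open>Suc i \<le> n\<close> by simp
    finally show ?case by simp
  qed
qed


lemma dim_empty: "cdim {} = 0"
  using cs.dim_eq_card[of "{}" "{}"] cs.independent_empty by (simp add: cdim_cs)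

lemma dim_0_Int: "cdim ({0} \<inter> X) = 0" "cdim (X \<inter> {0}) = 0"
  by (cases "0 \<in> X"; simp add: dim_zero dim_empty)+

lemma zero_Coord: "{0} = Coord {}"
  by (auto simp: Coord_def fun_eq_iff)

lemma csub_zero: "csub {0}"
  by (simp add: zero_Coord csub_Coord)

lemma flag_mono:
  assumes "is_flag n r lam F" "j \<le> i" "i \<le> n" shows "F j \<subseteq> F i"
  using assms(2,3)
proof (induct i)
  case 0 then show ?case by simp
next
  case (Suc i)
  show ?case
  proof (cases "j = Suc i")
    case True then show ?thesis by simp
  next
    case False
    then have "F j \<subseteq> F i" using Suc by auto
    moreover have "F i \<subseteq> F (Suc i)" using assms(1) Suc(3) unfolding is_flag_def by force
    ultimately show ?thesis by blast
  qed
qed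

lemma flag_props:
  assumes "is_flag n r lam F" "i \<le> n" shows "csub (F i)" "F i \<subseteq> Vsp r"
proof -
  show "csub (F i)"
  proof (cases "i = 0")
    case True then show ?thesis using assms csub_zero unfolding is_flag_def by simp
  next
    case False then show ?thesis using assms unfolding is_flag_def by auto
  qed
  show "F i \<subseteq> Vsp r" using flag_mono[OF assms(1) assms(2) order_refl] assms(1)
    unfolding is_flag_def by simp
qed

lemma flag_dim:
  assumes "is_flag n r lam F" "i \<le> n" shows "cdim (F i) = (\<Sum>k=1..i. lam k)"
  using assms(2)
proof (induct i)
  case 0 then show ?case using assms(1) dim_zero unfolding is_flag_def by simp
next
  case (Suc i)
  then show ?case using assms(1) unfolding is_flag_def by auto
qed

lemma flag_0: "is_flag n r lam F \<Longrightarrow> F 0 = {0}" by (simp add: is_flag_def)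
lemma flag_n: "is_flag n r lam F \<Longrightarrow> F n = Vsp r" by (simp add: is_flag_def)

lemma relpos_2diff:
  assumes F: "is_flag n r a F" and G: "is_flag n r b G"
    and i: "1 \<le> i" "i \<le> n" and j: "1 \<le> j" "j \<le> n"
  shows "int (relpos n F G i j) = int (cdim (F i \<inter> G j)) - cdim (F i \<inter> G (j - 1))
           - cdim (F (i - 1) \<inter> G j) + cdim (F (i - 1) \<inter> G (j - 1))"
proof -
  have sF: "csub (F i)" "csub (F (i - 1))" "F i \<subseteq> Vsp r" "F (i - 1) \<subseteq> F i"
    using flag_props[OF F] flag_mono[OF F] i by auto
  have sG: "csub (G j)" "csub (G (j - 1))" "G j \<subseteq> Vsp r" "G (j - 1) \<subseteq> G j"
    using flag_props[OF G] flag_mono[OF G] j by auto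
  let ?X = "F i \<inter> G (j - 1)" and ?Y = "F (i - 1) \<inter> G j"
  have sX: "csub ?X" "?X \<subseteq> Vsp r" using sF sG csub_Int by auto
  have sY: "csub ?Y" "?Y \<subseteq> Vsp r" using sF sG csub_Int by auto
  have XY: "?X \<inter> ?Y = F (i - 1) \<inter> G (j - 1)" using sF sG by auto
  have g: "cdim (ssum ?X ?Y) + cdim (F (i - 1) \<inter> G (j - 1)) = cdim ?X + cdim ?Y"
    using grassmann[OF sX(1) sY(1) sX(2) sY(2)] XY by simp
  have le: "cdim (ssum ?X ?Y) \<le> cdim (F i \<inter> G j)"
  proof (rule dim_mono')
    show "ssum ?X ?Y \<subseteq> F i \<inter> G j"
      by (rule ssum_le[OF csub_Int[OF sF(1) sG(1)]]) (use sF sG in auto)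
    show "csub (ssum ?X ?Y)" using sX sY csub_ssum by auto
    show "F i \<inter> G j \<subseteq> Vsp r" using sF by auto
  qed
  have "relpos n F G i j = cdim (F i \<inter> G j) - cdim (ssum ?X ?Y)"
    using i j unfolding relpos_def by simp
  then show ?thesis using g le by simp
qed

lemma relpos_D:
  assumes F: "is_flag n r a F" and G: "is_flag n r b G" and "i \<le> n" "j \<le> n"
  shows "cdim (F i \<inter> G j) = D (relpos n F G) i j"
proof -
  have "int (cdim (F i \<inter> G j)) = int (D (relpos n F G) i j)"
  proof (rule D_eqI[where d = "\<lambda>i j. int (cdim (F i \<inter> G j))" and n = n])
    show "\<And>j. int (cdim (F 0 \<inter> G j)) = 0" using flag_0[OF F] dim_0_Int by simp
    show "\<And>i. int (cdim (F i \<inter> G 0)) = 0" using flag_0[OF G] dim_0_Int by simp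
    show "\<And>i j. 1 \<le> i \<Longrightarrow> i \<le> n \<Longrightarrow> 1 \<le> j \<Longrightarrow> j \<le> n \<Longrightarrow> int (relpos n F G i j) =
       int (cdim (F i \<inter> G j)) - int (cdim (F (i - 1) \<inter> G j)) - int (cdim (F i \<inter> G (j - 1))) +
       int (cdim (F (i - 1) \<inter> G (j - 1)))"
      using relpos_2diff[OF F G] by simp
  qed (use assms in auto)
  then show ?thesis by simp
qed


lemma ps_0[simp]: "ps p 0 = 0" by (simp add: ps_def)

lemma ps_Suc: "t < length p \<Longrightarrow> ps p (Suc t) = ps p t + p ! t"
  by (simp add: ps_def take_Suc_conv_app_nth)

lemma ps_Suc_ge: "length p \<le> t \<Longrightarrow> ps p (Suc t) = ps p t"
  by (simp add: ps_def)

lemma ps_len: "ps p (length p) = sum_list p" by (simp add: ps_def)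

lemma ps_le_Suc: "ps p t \<le> ps p (Suc t)"
  by (cases "t < length p") (auto simp: ps_Suc ps_Suc_ge)

lemma ps_mono: "t \<le> t' \<Longrightarrow> ps p t \<le> ps p t'"
  by (induct t' rule: dec_induct) (auto intro: order_trans[OF _ ps_le_Suc])

lemma ps_strict: "is_decomp n p \<Longrightarrow> t < length p \<Longrightarrow> ps p t < ps p (Suc t)"
  unfolding is_decomp_def by (simp add: ps_Suc)

lemma ps_strict_mono: "is_decomp n p \<Longrightarrow> t' \<le> length p \<Longrightarrow> t < t' \<Longrightarrow> ps p t < ps p t'"
proof (induct t')
  case 0 then show ?case by simp
next
  case (Suc m)
  then show ?case using ps_strict[of n p m] ps_le_Suc[of p m]
    by (cases "t = m") (auto simp: less_Suc_eq)
qed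

lemma ps_n: "is_decomp n p \<Longrightarrow> ps p (length p) = n"
  by (simp add: ps_len is_decomp_def)

lemma ps_le_n: "is_decomp n p \<Longrightarrow> ps p t \<le> n"
proof -
  assume d: "is_decomp n p"
  have "ps p t \<le> ps p (length p)"
  proof (cases "t \<le> length p")
    case True then show ?thesis by (rule ps_mono)
  next
    case False then show ?thesis by (simp add: ps_def)
  qed
  then show ?thesis using ps_n[OF d] by simp
qed

lemma block_exists:
  assumes "is_decomp n p" "0 < n" "j \<le> n"
  shows "\<exists>t<length p. ps p t \<le> j \<and> j \<le> ps p (Suc t)"
proof -
  have "1 \<le> k \<Longrightarrow> j \<le> ps p k \<Longrightarrow> \<exists>t<k. ps p t \<le> j \<and> j \<le> ps p (Suc t)" for k
  proof (induct k)
    case 0 then show ?case by simp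
  next
    case (Suc k)
    show ?case
    proof (cases "k \<ge> 1 \<and> j \<le> ps p k")
      case True then show ?thesis using Suc by (meson less_Suc_eq)
    next
      case False then show ?thesis using Suc(3) by (intro exI[of _ k]) (cases k; auto)
    qed
  qed
  moreover have "length p \<ge> 1" using assms unfolding is_decomp_def by (cases p) auto
  ultimately show ?thesis using assms ps_n by metis
qed

lemma block_unique:
  assumes "is_decomp n p" "t < length p" "t' < length p"
    "ps p t < j" "j \<le> ps p (Suc t)" "ps p t' < j" "j \<le> ps p (Suc t')"
  shows "t = t'"
proof (rule ccontr)
  assume "t \<noteq> t'"
  then consider "Suc t \<le> t'" | "Suc t' \<le> t" by linarith
  then show False
  proof cases
    case 1 then show ?thesis using ps_mono[OF 1, of p] assms by auto
  next
    case 2 then show ?thesis using ps_mono[OF 2, of p] assms by auto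
  qed
qed

lemma sum_blocks:
  "(\<Sum>j\<in>{0<..ps p k}. f j) = (\<Sum>t<k. \<Sum>j\<in>{ps p t<..ps p (Suc t)}. f j)"
proof (induct k)
  case 0 then show ?case by simp
next
  case (Suc k)
  have "(\<Sum>j\<in>{0<..ps p (Suc k)}. f j) = (\<Sum>j\<in>{0<..ps p k}. f j) + (\<Sum>j\<in>{ps p k<..ps p (Suc k)}. f j)"
    by (rule sum_split_ivl2) (auto simp: ps_le_Suc)
  then show ?case using Suc by simp
qed

lemma sum_blocks_n:
  assumes "is_decomp n p"
  shows "(\<Sum>j=1..n. f j) = (\<Sum>t<length p. \<Sum>j\<in>{ps p t<..ps p (Suc t)}. f j)"
proof -
  have "{1..n} = {0<..ps p (length p)}" using ps_n[OF assms] by auto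
  then show ?thesis using sum_blocks by simp
qed

definition supp :: "nat \<Rightarrow> mat \<Rightarrow> bool" where
  "supp n M \<longleftrightarrow> (\<forall>i j. M i j \<noteq> 0 \<longrightarrow> i \<in> {1..n} \<and> j \<in> {1..n})"

definition samedata :: "nat \<Rightarrow> nat list \<Rightarrow> mat \<Rightarrow> mat \<Rightarrow> bool" where
  "samedata n p M M' \<longleftrightarrow> (\<forall>i\<le>n. \<forall>t\<le>length p. D M i (ps p t) = D M' i (ps p t)) \<and>
      (\<forall>j\<le>n. D M n j = D M' n j)"

definition cgform :: "nat \<Rightarrow> nat list \<Rightarrow> mat \<Rightarrow> bool" where
  "cgform n p M \<longleftrightarrow> (\<forall>t<length p. \<forall>i\<le>n. \<forall>j. ps p t \<le> j \<and> j \<le> ps p (Suc t) \<longrightarrow>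
     int (D M i j) = int (D M i (ps p t)) + max 0 (int (D M i (ps p (Suc t))) - int (D M i (ps p t))
        + int (D M n j) - int (D M n (ps p (Suc t)))))"

lemma sum2_pos:
  assumes "(\<Sum>k\<in>A. \<Sum>l\<in>B. (M::mat) k l) > 0"
  shows "\<exists>k\<in>A. \<exists>l\<in>B. M k l > 0"
proof (rule ccontr)
  assume "\<not> ?thesis"
  then have "(\<Sum>k\<in>A. \<Sum>l\<in>B. M k l) = 0" by (auto intro!: sum.neutral)
  then show False using assms by simp
qed

lemma Rect_pos: "Rect M i1 i2 j1 j2 > 0 \<Longrightarrow> \<exists>k. i1 < k \<and> k \<le> i2 \<and> (\<exists>l. j1 < l \<and> l \<le> j2 \<and> M k l > 0)"
proof -
  assume "Rect M i1 i2 j1 j2 > 0"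
  then have "\<exists>k\<in>{i1<..i2}. \<exists>l\<in>{j1<..j2}. M k l > 0"
    unfolding Rect_def by (rule sum2_pos)
  then show ?thesis by (metis greaterThanAtMost_iff)
qed

lemma le_Rect: "i1 < k \<Longrightarrow> k \<le> i2 \<Longrightarrow> j1 < l \<Longrightarrow> l \<le> j2 \<Longrightarrow> M k l \<le> Rect M i1 i2 j1 j2"
proof -
  assume a: "i1 < k" "k \<le> i2" "j1 < l" "l \<le> j2"
  have "M k l \<le> (\<Sum>l\<in>{j1<..j2}. M k l)" by (rule member_le_sum) (use a in auto)
  also have "\<dots> \<le> (\<Sum>k\<in>{i1<..i2}. \<Sum>l\<in>{j1<..j2}. M k l)"
    by (rule member_le_sum[where f = "\<lambda>k. \<Sum>l\<in>{j1<..j2}. M k l"]) (use a in auto)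
  finally show ?thesis by (simp add: Rect_def)
qed

lemma cg_contra:
  assumes "col_generic n p M" "t < length p" "1 \<le> k1" "k1 < k2" "k2 \<le> n"
    "ps p t < l1" "l1 < l2" "l2 \<le> ps p (Suc t)" "is_decomp n p"
  shows "M k1 l1 * M k2 l2 = 0"
proof -
  have "ps p (Suc t) \<le> n" using ps_le_n assms(9) by blast
  have "generic_sub {1..n} {ps p t + 1..ps p (Suc t)} M" using assms(1,2) unfolding col_generic_def by auto
  then show ?thesis unfolding generic_sub_def using assms(3-8) \<open>ps p (Suc t) \<le> n\<close> by auto
qed

lemma cg_cgform:
  assumes dec: "is_decomp n p" and cg: "col_generic n p M"
  shows "cgform n p M"
  unfolding cgform_def
proof (intro allI impI)
  fix t i j assume t: "t < length p" and i: "i \<le> n" and j: "ps p t \<le> j \<and> j \<le> ps p (Suc t)"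
  let ?lo = "ps p t" and ?hi = "ps p (Suc t)"
  have hin: "?hi \<le> n" using ps_le_n dec by blast
  define P where "P = Rect M 0 i ?lo j"
  define X where "X = Rect M i n j ?hi"
  have P: "int P = int (D M i j) - D M i ?lo" unfolding P_def using Rect_D[of 0 i ?lo j M] j by simp
  have X: "int X = int (D M n ?hi) - D M i ?hi - D M n j + D M i j"
    unfolding X_def using Rect_D[of i n j ?hi M] j i by simp
  have "P = 0 \<or> X = 0"
  proof (rule ccontr)
    assume "\<not> ?thesis"
    then obtain k1 l1 k2 l2 where a: "0 < k1" "k1 \<le> i" "?lo < l1" "l1 \<le> j" "M k1 l1 > 0"
      "i < k2" "k2 \<le> n" "j < l2" "l2 \<le> ?hi" "M k2 l2 > 0"
      using Rect_pos[of M 0 i ?lo j] Rect_pos[of M i n j ?hi] unfolding P_def X_def by blast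
    have "M k1 l1 * M k2 l2 = 0" by (rule cg_contra[OF cg t]) (use a dec in auto)
    then show False using a by simp
  qed
  then show "int (D M i j) = int (D M i ?lo) + max 0 (int (D M i ?hi) - int (D M i ?lo) + int (D M n j) - int (D M n ?hi))"
    using P X by auto
qed

lemma cgform_cg:
  assumes dec: "is_decomp n p" and su: "supp n M" and cf: "cgform n p M"
  shows "col_generic n p M"
  unfolding col_generic_def generic_sub_def
proof (intro allI impI ballI)
  fix t i k s u
  assume t: "t < length p" and ik: "i \<in> {1..n}" "k \<in> {1..n}"
    and su': "s \<in> {ps p t + 1..ps p (Suc t)}" "u \<in> {ps p t + 1..ps p (Suc t)}" and lt: "i < k \<and> s < u"
  let ?lo = "ps p t" and ?hi = "ps p (Suc t)"
  show "M i s * M k u = 0"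
  proof (rule ccontr)
    assume "M i s * M k u \<noteq> 0"
    then have pos: "M i s > 0" "M k u > 0" by auto
    define P where "P = Rect M 0 i ?lo s"
    define X where "X = Rect M i n s ?hi"
    have P: "int P = int (D M i s) - D M i ?lo" unfolding P_def using Rect_D[of 0 i ?lo s M] su' by simp
    have X: "int X = int (D M n ?hi) - D M i ?hi - D M n s + D M i s"
      unfolding X_def using Rect_D[of i n s ?hi M] su' ik by simp
    have "M i s \<le> P" unfolding P_def by (rule le_Rect) (use ik su' in auto)
    moreover have "M k u \<le> X" unfolding X_def by (rule le_Rect) (use ik su' lt in auto)
    moreover have "int (D M i s) = int (D M i ?lo) + max 0 (int (D M i ?hi) - int (D M i ?lo) + int (D M n s) - int (D M n ?hi))"
      using cf[unfolded cgform_def, rule_format, of t i s] t ik su' by auto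
    then have "int P = max 0 (int P - int X)" using P X by (simp add: algebra_simps)
    ultimately show False using pos by (simp add: max_def split: if_splits)
  qed
qed

lemma cgform_unique:
  assumes dec: "is_decomp n p" and n: "0 < n" and su: "supp n M" "supp n M'"
    and cf: "cgform n p M" "cgform n p M'" and sd: "samedata n p M M'"
  shows "M = M'"
proof -
  have DD: "D M i j = D M' i j" if ij: "i \<le> n" "j \<le> n" for i j
  proof -
    obtain t where t: "t < length p" "ps p t \<le> j" "j \<le> ps p (Suc t)"
      using block_exists[OF dec n ij(2)] by blast
    have e1: "int (D M i j) = int (D M i (ps p t)) + max 0 (int (D M i (ps p (Suc t))) - int (D M i (ps p t))
        + int (D M n j) - int (D M n (ps p (Suc t))))"
      using cf(1)[unfolded cgform_def, rule_format, of t i j] t ij by auto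
    have e2: "int (D M' i j) = int (D M' i (ps p t)) + max 0 (int (D M' i (ps p (Suc t))) - int (D M' i (ps p t))
        + int (D M' n j) - int (D M' n (ps p (Suc t))))"
      using cf(2)[unfolded cgform_def, rule_format, of t i j] t ij by auto
    have "D M i (ps p t) = D M' i (ps p t)" "D M i (ps p (Suc t)) = D M' i (ps p (Suc t))"
      "D M n j = D M' n j" "D M n (ps p (Suc t)) = D M' n (ps p (Suc t))"
      using sd t ij ps_le_n[OF dec] unfolding samedata_def by auto
    then have "int (D M i j) = int (D M' i j)" using e1 e2 by simp
    then show ?thesis by simp
  qed
  show ?thesis
  proof (intro ext)
    fix i j
    show "M i j = M' i j"
    proof (cases "i \<in> {1..n} \<and> j \<in> {1..n}")
      case True
      then have "int (M i j) = int (M' i j)" using D_entry[of i j M] D_entry[of i j M'] DD by auto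
      then show ?thesis by simp
    next
      case False
      then have "M i j = 0" "M' i j = 0" using su unfolding supp_def by blast+
      then show ?thesis by simp
    qed
  qed
qed


lemma stabdim_D: "stabdim n M = (\<Sum>i=1..n. \<Sum>j=1..n. M i j * D M i j)"
  by (simp add: stabdim_def D_def sum_distrib_left)

lemma D_rec:
  assumes "1 \<le> i" "1 \<le> j"
  shows "D M i j = D M (i - 1) (j - 1) + (\<Sum>l=1..j. M i l) + (\<Sum>k=1..i - 1. M k j)"
proof -
  obtain a b where ab: "i = Suc a" "j = Suc b" using assms by (metis Suc_pred' less_eq_Suc_le One_nat_def)
  show ?thesis unfolding ab using D_Suc1[of M a "Suc b"] D_Suc2[of M a b] by simp
qed

lemma tri1: "2 * (\<Sum>j=1..m. x j * (\<Sum>l=1..j. x l)) = (\<Sum>j=1..m. x j)^2 + (\<Sum>j=1..m. (x j)^2)"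
  for x :: "nat \<Rightarrow> nat"
proof (induct m)
  case 0 then show ?case by simp
next
  case (Suc m)
  then show ?case by (simp add: power2_eq_square algebra_simps)
qed

lemma tri2: "2 * (\<Sum>i=1..m. y i * (\<Sum>k=1..i - 1. y k)) + (\<Sum>i=1..m. (y i)^2) = (\<Sum>i=1..m. y i)^2"
  for y :: "nat \<Rightarrow> nat"
proof (induct m)
  case 0 then show ?case by simp
next
  case (Suc m)
  then show ?case by (simp add: power2_eq_square algebra_simps)
qed

definition Sterm :: "nat \<Rightarrow> mat \<Rightarrow> nat" where
  "Sterm n M = (\<Sum>i=1..n. \<Sum>j=1..n. M i j * D M (i - 1) (j - 1))"

lemma stabdim_formula:
  "2 * stabdim n M = (\<Sum>i=1..n. (ro n M i)^2) + (\<Sum>j=1..n. (co n M j)^2) + 2 * Sterm n M"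
proof -
  define RT where "RT = (\<Sum>i=1..n. \<Sum>j=1..n. M i j * (\<Sum>l=1..j. M i l))"
  define CT where "CT = (\<Sum>i=1..n. \<Sum>j=1..n. M i j * (\<Sum>k=1..i - 1. M k j))"
  have "stabdim n M = (\<Sum>i=1..n. \<Sum>j=1..n. M i j * D M (i - 1) (j - 1) + M i j * (\<Sum>l=1..j. M i l)
      + M i j * (\<Sum>k=1..i - 1. M k j))"
    unfolding stabdim_D by (intro sum.cong refl) (simp add: D_rec algebra_simps)
  also have "\<dots> = Sterm n M + RT + CT"
    unfolding Sterm_def RT_def CT_def by (simp add: sum.distrib)
  finally have st: "stabdim n M = Sterm n M + RT + CT" .
  have "2 * RT = (\<Sum>i=1..n. 2 * (\<Sum>j=1..n. M i j * (\<Sum>l=1..j. M i l)))"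
    unfolding RT_def by (simp add: sum_distrib_left)
  also have "\<dots> = (\<Sum>i=1..n. (ro n M i)^2 + (\<Sum>j=1..n. (M i j)^2))"
    by (rule sum.cong[OF refl]) (unfold ro_def, rule tri1)
  finally have rt: "2 * RT = (\<Sum>i=1..n. (ro n M i)^2) + (\<Sum>i=1..n. \<Sum>j=1..n. (M i j)^2)"
    by (simp add: sum.distrib)
  have "CT = (\<Sum>j=1..n. \<Sum>i=1..n. M i j * (\<Sum>k=1..i - 1. M k j))"
    unfolding CT_def by (rule sum.swap)
  then have "2 * CT + (\<Sum>j=1..n. \<Sum>i=1..n. (M i j)^2) =
      (\<Sum>j=1..n. 2 * (\<Sum>i=1..n. M i j * (\<Sum>k=1..i - 1. M k j)) + (\<Sum>i=1..n. (M i j)^2))"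
    by (simp add: sum_distrib_left sum.distrib)
  also have "\<dots> = (\<Sum>j=1..n. (co n M j)^2)"
    by (rule sum.cong[OF refl]) (unfold co_def, rule tri2)
  finally have ct: "2 * CT + (\<Sum>j=1..n. \<Sum>i=1..n. (M i j)^2) = (\<Sum>j=1..n. (co n M j)^2)" .
  have sw: "(\<Sum>j=1..n. \<Sum>i=1..n. (M i j)^2) = (\<Sum>i=1..n. \<Sum>j=1..n. (M i j)^2)"
    by (rule sum.swap)
  show ?thesis using st rt ct sw by linarith
qed

definition Wterm :: "nat \<Rightarrow> nat list \<Rightarrow> mat \<Rightarrow> nat" where
  "Wterm n p M = (\<Sum>i=1..n. \<Sum>t<length p. \<Sum>j\<in>{ps p t<..ps p (Suc t)}.
      M i j * Rect M 0 (i - 1) (ps p t) (j - 1))"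

definition Xterm :: "nat \<Rightarrow> nat list \<Rightarrow> mat \<Rightarrow> nat" where
  "Xterm n p M = (\<Sum>i=1..n. (ro n M i)^2) + (\<Sum>j=1..n. (co n M j)^2) +
     2 * (\<Sum>i=1..n. \<Sum>t<length p. D M (i - 1) (ps p t) * Rect M (i - 1) i (ps p t) (ps p (Suc t)))"

lemma Rect_row: "1 \<le> i \<Longrightarrow> Rect M (i - 1) i j1 j2 = (\<Sum>j\<in>{j1<..j2}. M i j)"
proof -
  assume "1 \<le> i"
  then have "{i - 1<..i} = {i}" by auto
  then show ?thesis by (simp add: Rect_def)
qed

lemma Sterm_split:
  assumes dec: "is_decomp n p"
  shows "Sterm n M = (\<Sum>i=1..n. \<Sum>t<length p. D M (i - 1) (ps p t) * Rect M (i - 1) i (ps p t) (ps p (Suc t)))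
     + Wterm n p M"
proof -
  have "Sterm n M = (\<Sum>i=1..n. \<Sum>t<length p. \<Sum>j\<in>{ps p t<..ps p (Suc t)}. M i j * D M (i - 1) (j - 1))"
    unfolding Sterm_def by (rule sum.cong[OF refl]) (rule sum_blocks_n[OF dec])
  also have "\<dots> = (\<Sum>i=1..n. \<Sum>t<length p. \<Sum>j\<in>{ps p t<..ps p (Suc t)}.
      M i j * D M (i - 1) (ps p t) + M i j * Rect M 0 (i - 1) (ps p t) (j - 1))"
  proof (intro sum.cong refl)
    fix i t j assume j: "j \<in> {ps p t<..ps p (Suc t)}"
    have "int (Rect M 0 (i - 1) (ps p t) (j - 1)) = int (D M (i - 1) (j - 1)) - D M (i - 1) (ps p t)"
      using Rect_D[of 0 "i - 1" "ps p t" "j - 1" M] j by (simp add: less_eq_Suc_le Suc_le_D le_diff_conv2)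
    then have "D M (i - 1) (j - 1) = D M (i - 1) (ps p t) + Rect M 0 (i - 1) (ps p t) (j - 1)" by linarith
    then show "M i j * D M (i - 1) (j - 1) = M i j * D M (i - 1) (ps p t) + M i j * Rect M 0 (i - 1) (ps p t) (j - 1)"
      by (simp add: algebra_simps)
  qed
  also have "\<dots> = (\<Sum>i=1..n. \<Sum>t<length p. \<Sum>j\<in>{ps p t<..ps p (Suc t)}. M i j * D M (i - 1) (ps p t))
     + Wterm n p M"
    unfolding Wterm_def by (simp add: sum.distrib)
  also have "(\<Sum>i=1..n. \<Sum>t<length p. \<Sum>j\<in>{ps p t<..ps p (Suc t)}. M i j * D M (i - 1) (ps p t))
     = (\<Sum>i=1..n. \<Sum>t<length p. D M (i - 1) (ps p t) * Rect M (i - 1) i (ps p t) (ps p (Suc t)))"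
  proof (rule sum.cong[OF refl], rule sum.cong[OF refl])
    fix i t assume "i \<in> {1..n}"
    then have "Rect M (i - 1) i (ps p t) (ps p (Suc t)) = (\<Sum>j\<in>{ps p t<..ps p (Suc t)}. M i j)"
      by (intro Rect_row) auto
    then show "(\<Sum>j\<in>{ps p t<..ps p (Suc t)}. M i j * D M (i - 1) (ps p t)) =
       D M (i - 1) (ps p t) * Rect M (i - 1) i (ps p t) (ps p (Suc t))"
      by (simp add: sum_distrib_left mult.commute)
  qed
  finally show ?thesis .
qed

lemma stabdim_XW:
  assumes "is_decomp n p"
  shows "2 * stabdim n M = Xterm n p M + 2 * Wterm n p M"
  using stabdim_formula[of n M] Sterm_split[OF assms, of M] unfolding Xterm_def by simp

lemma ro_D: "1 \<le> i \<Longrightarrow> int (ro n M i) = int (D M i n) - D M (i - 1) n"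
  using D_Suc1[of M "i - 1" n] by (simp add: ro_def)

lemma co_D: "1 \<le> j \<Longrightarrow> int (co n M j) = int (D M n j) - D M n (j - 1)"
  using D_Suc2[of M n "j - 1"] by (simp add: co_def)

lemma Xterm_eq:
  assumes dec: "is_decomp n p" and sd: "samedata n p M M'"
  shows "Xterm n p M = Xterm n p M'"
proof -
  have Dn: "D M i n = D M' i n" if "i \<le> n" for i
    using sd that ps_n[OF dec] unfolding samedata_def by (metis order_refl)
  have r: "ro n M i = ro n M' i" if "i \<in> {1..n}" for i
    using ro_D[of i n M] ro_D[of i n M'] Dn[of i] Dn[of "i - 1"] that by auto
  have c: "co n M j = co n M' j" if "j \<in> {1..n}" for j
    using co_D[of j n M] co_D[of j n M'] sd that unfolding samedata_def by auto
  have d: "D M (i - 1) (ps p t) * Rect M (i - 1) i (ps p t) (ps p (Suc t)) =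
      D M' (i - 1) (ps p t) * Rect M' (i - 1) i (ps p t) (ps p (Suc t))"
    if "i \<in> {1..n}" "t < length p" for i t
  proof -
    have "D M a (ps p b) = D M' a (ps p b)" if "a \<le> n" "b \<le> length p" for a b
      using sd that unfolding samedata_def by auto
    then have e: "D M i (ps p t) = D M' i (ps p t)" "D M (i - 1) (ps p t) = D M' (i - 1) (ps p t)"
      "D M i (ps p (Suc t)) = D M' i (ps p (Suc t))" "D M (i - 1) (ps p (Suc t)) = D M' (i - 1) (ps p (Suc t))"
      using that by auto
    then have "int (Rect M (i - 1) i (ps p t) (ps p (Suc t))) = int (Rect M' (i - 1) i (ps p t) (ps p (Suc t)))"
      using Rect_D[of "i - 1" i "ps p t" "ps p (Suc t)"] ps_le_Suc[of p t] that by simp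
    then show ?thesis using e(2) by simp
  qed
  have "(\<Sum>i=1..n. (ro n M i)^2) = (\<Sum>i=1..n. (ro n M' i)^2)" using r by (intro sum.cong) auto
  moreover have "(\<Sum>i=1..n. (co n M i)^2) = (\<Sum>i=1..n. (co n M' i)^2)" using c by (intro sum.cong) auto
  moreover have "(\<Sum>i=1..n. \<Sum>t<length p. D M (i - 1) (ps p t) * Rect M (i - 1) i (ps p t) (ps p (Suc t)))
    = (\<Sum>i=1..n. \<Sum>t<length p. D M' (i - 1) (ps p t) * Rect M' (i - 1) i (ps p t) (ps p (Suc t)))"
    using d by (intro sum.cong refl) auto
  ultimately show ?thesis unfolding Xterm_def by simp
qed

lemma Wterm_cg:
  assumes dec: "is_decomp n p" and cg: "col_generic n p M"
  shows "Wterm n p M = 0"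
  unfolding Wterm_def
proof (intro sum.neutral ballI)
  fix i t j assume i: "i \<in> {1..n}" and t: "t \<in> {..<length p}" and j: "j \<in> {ps p t<..ps p (Suc t)}"
  show "M i j * Rect M 0 (i - 1) (ps p t) (j - 1) = 0"
  proof (rule ccontr)
    assume "\<not> ?thesis"
    then have "M i j > 0" "Rect M 0 (i - 1) (ps p t) (j - 1) > 0" by auto
    then obtain k l where kl: "0 < k" "k \<le> i - 1" "ps p t < l" "l \<le> j - 1" "M k l > 0"
      using Rect_pos by blast
    have "M k l * M i j = 0" by (rule cg_contra[OF cg]) (use t kl i j dec in auto)
    then show False using kl \<open>M i j > 0\<close> by simp
  qed
qed

lemma Wterm_pos:
  assumes dec: "is_decomp n p" and ncg: "\<not> col_generic n p M"
  shows "Wterm n p M > 0"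
proof -
  obtain t i k s u where t: "t < length p" and ik: "i \<in> {1..n}" "k \<in> {1..n}"
    and su: "s \<in> {ps p t + 1..ps p (Suc t)}" "u \<in> {ps p t + 1..ps p (Suc t)}"
    and lt: "i < k" "s < u" and nz: "M i s * M k u \<noteq> 0"
    using ncg unfolding col_generic_def generic_sub_def by blast
  have "M i s \<le> Rect M 0 (k - 1) (ps p t) (u - 1)" by (rule le_Rect) (use ik su lt in auto)
  then have "M k u * M i s \<le> M k u * Rect M 0 (k - 1) (ps p t) (u - 1)" by (rule mult_le_mono2)
  moreover have "0 < M k u * M i s" using nz by simp
  ultimately have "0 < M k u * Rect M 0 (k - 1) (ps p t) (u - 1)" by linarith
  also have "M k u * Rect M 0 (k - 1) (ps p t) (u - 1) \<le>
     (\<Sum>j\<in>{ps p t<..ps p (Suc t)}. M k j * Rect M 0 (k - 1) (ps p t) (j - 1))"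
    by (rule member_le_sum[where f = "\<lambda>j. M k j * Rect M 0 (k - 1) (ps p t) (j - 1)"]) (use su in auto)
  also have "\<dots> \<le> (\<Sum>t<length p. \<Sum>j\<in>{ps p t<..ps p (Suc t)}. M k j * Rect M 0 (k - 1) (ps p t) (j - 1))"
    by (rule member_le_sum[where f = "\<lambda>t. \<Sum>j\<in>{ps p t<..ps p (Suc t)}. M k j * Rect M 0 (k - 1) (ps p t) (j - 1)"])
       (use t in auto)
  also have "\<dots> \<le> Wterm n p M"
    unfolding Wterm_def
    by (rule member_le_sum[where f = "\<lambda>k. \<Sum>t<length p. \<Sum>j\<in>{ps p t<..ps p (Suc t)}. M k j * Rect M 0 (k - 1) (ps p t) (j - 1)"])
       (use ik in auto)
  finally show ?thesis .
qed

lemma stab_min: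
  assumes dec: "is_decomp n p" and n: "0 < n" and su: "supp n M" "supp n M'"
    and cg: "col_generic n p M" and sd: "samedata n p M M'" and ne: "M \<noteq> M'"
  shows "stabdim n M < stabdim n M'"
proof -
  have "\<not> col_generic n p M'"
  proof
    assume "col_generic n p M'"
    then have "M = M'" using cgform_unique[OF dec n su cg_cgform[OF dec cg] cg_cgform[OF dec] sd] by blast
    then show False using ne by simp
  qed
  then have "Wterm n p M' > 0" using Wterm_pos dec by blast
  moreover have "Wterm n p M = 0" using Wterm_cg dec cg by blast
  moreover have "Xterm n p M = Xterm n p M'" using Xterm_eq dec sd by blast
  ultimately show ?thesis using stabdim_XW[OF dec, of M] stabdim_XW[OF dec, of M'] by linarith
qed



lemma labelling:
  assumes "finite X"
  shows "\<exists>f::nat \<Rightarrow> 'a. (\<forall>k < sum w X. f k \<in> X) \<and> (\<forall>x\<in>X. card {k. k < sum w X \<and> f k = x} = w x)"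
  using assms
proof (induct X rule: finite_induct)
  case empty then show ?case by simp
next
  case (insert x X)
  then obtain f where f: "\<forall>k < sum w X. f k \<in> X" "\<forall>y\<in>X. card {k. k < sum w X \<and> f k = y} = w y" by blast
  define g where "g k = (if k < sum w X then f k else x)" for k
  have s: "sum w (insert x X) = sum w X + w x" using insert by simp
  have "\<forall>k < sum w (insert x X). g k \<in> insert x X" using f unfolding g_def by auto
  moreover have "card {k. k < sum w (insert x X) \<and> g k = y} = w y" if y: "y \<in> insert x X" for y
  proof (cases "y = x")
    case True
    have "{k. k < sum w (insert x X) \<and> g k = y} = {sum w X..<sum w X + w x}"
      using f insert(2) True s unfolding g_def by (auto, metis not_le)
    then show ?thesis using True by simp
  next
    case False
    then have "{k. k < sum w (insert x X) \<and> g k = y} = {k. k < sum w X \<and> f k = y}"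
      using s unfolding g_def by auto
    then show ?thesis using f False y by auto
  qed
  ultimately show ?case by blast
qed

lemma D_determines:
  assumes "supp n M" "supp n M'" "\<And>i j. i \<le> n \<Longrightarrow> j \<le> n \<Longrightarrow> D M i j = D M' i j"
  shows "M = M'"
proof (intro ext)
  fix i j
  show "M i j = M' i j"
  proof (cases "i \<in> {1..n} \<and> j \<in> {1..n}")
    case True
    then have "int (M i j) = int (M' i j)" using D_entry[of i j M] D_entry[of i j M'] assms(3) by auto
    then show ?thesis by simp
  next
    case False
    then have "M i j = 0" "M' i j = 0" using assms(1,2) unfolding supp_def by blast+
    then show ?thesis by simp
  qed
qed

lemma Theta_supp: "A \<in> Theta n r \<Longrightarrow> supp n A"
  unfolding Theta_def supp_def by auto

lemma relpos_supp: "supp n (relpos n F G)"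
  unfolding supp_def relpos_def by auto

definition cells :: "nat \<Rightarrow> (nat \<times> nat) set" where "cells n = {1..n} \<times> {1..n}"

definition lab :: "nat \<Rightarrow> nat \<Rightarrow> mat \<Rightarrow> nat \<Rightarrow> nat \<times> nat" where
  "lab n r A = (SOME f. (\<forall>k < r. f k \<in> cells n) \<and>
      (\<forall>x\<in>cells n. card {k. k < r \<and> f k = x} = A (fst x) (snd x)))"

lemma sum_prod_cells: "(\<Sum>x\<in>S\<times>T. f (fst x) (snd x)) = (\<Sum>a\<in>S. \<Sum>b\<in>T. f a b)"
  by (simp add: sum.cartesian_product split_def)

lemma Theta_sum_cells: "A \<in> Theta n r \<Longrightarrow> (\<Sum>x\<in>cells n. A (fst x) (snd x)) = r"
  unfolding cells_def Theta_def sum_prod_cells by simp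

lemma lab_props:
  assumes "A \<in> Theta n r"
  shows "\<forall>k < r. lab n r A k \<in> cells n" "\<forall>x\<in>cells n. card {k. k < r \<and> lab n r A k = x} = A (fst x) (snd x)"
proof -
  have "\<exists>f. (\<forall>k < r. f k \<in> cells n) \<and> (\<forall>x\<in>cells n. card {k. k < r \<and> f k = x} = A (fst x) (snd x))"
    using labelling[of "cells n" "\<lambda>x. A (fst x) (snd x)"] Theta_sum_cells[OF assms]
    by (simp add: cells_def)
  then have "(\<forall>k < r. lab n r A k \<in> cells n) \<and>
      (\<forall>x\<in>cells n. card {k. k < r \<and> lab n r A k = x} = A (fst x) (snd x))"
    unfolding lab_def by (rule someI_ex)
  then show "\<forall>k < r. lab n r A k \<in> cells n" "\<forall>x\<in>cells n. card {k. k < r \<and> lab n r A k = x} = A (fst x) (snd x)"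
    by auto
qed

lemma lab_count:
  assumes A: "A \<in> Theta n r" and ij: "i \<le> n" "j \<le> n"
  shows "card {k. k < r \<and> fst (lab n r A k) \<le> i \<and> snd (lab n r A k) \<le> j} = D A i j"
proof -
  let ?l = "lab n r A"
  have eq: "{k. k < r \<and> fst (?l k) \<le> i \<and> snd (?l k) \<le> j} = (\<Union>x\<in>{1..i}\<times>{1..j}. {k. k < r \<and> ?l k = x})"
    using lab_props(1)[OF A] unfolding cells_def by fastforce
  have "card (\<Union>x\<in>{1..i}\<times>{1..j}. {k. k < r \<and> ?l k = x}) = (\<Sum>x\<in>{1..i}\<times>{1..j}. card {k. k < r \<and> ?l k = x})"
    by (rule card_UN_disjoint) auto
  also have "\<dots> = (\<Sum>x\<in>{1..i}\<times>{1..j}. A (fst x) (snd x))"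
    by (rule sum.cong[OF refl]) (use lab_props(2)[OF A] ij in \<open>auto simp: cells_def\<close>)
  also have "\<dots> = D A i j" unfolding D_def sum_prod_cells ..
  finally show ?thesis using eq by simp
qed

definition cF :: "nat \<Rightarrow> nat \<Rightarrow> mat \<Rightarrow> nat \<Rightarrow> vect set" where
  "cF n r A i = Coord {k. k < r \<and> fst (lab n r A k) \<le> i}"
definition cG :: "nat \<Rightarrow> nat \<Rightarrow> mat \<Rightarrow> nat \<Rightarrow> vect set" where
  "cG n r A j = Coord {k. k < r \<and> snd (lab n r A k) \<le> j}"

lemma cFG_Int: "cF n r A i \<inter> cG n r A j = Coord {k. k < r \<and> fst (lab n r A k) \<le> i \<and> snd (lab n r A k) \<le> j}"
  unfolding cF_def cG_def Coord_Int by (rule arg_cong[where f = Coord]) auto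

lemma cFG_dim: "A \<in> Theta n r \<Longrightarrow> i \<le> n \<Longrightarrow> j \<le> n \<Longrightarrow> cdim (cF n r A i \<inter> cG n r A j) = D A i j"
  by (simp add: cFG_Int cdim_Coord lab_count)

lemma cF_n: "A \<in> Theta n r \<Longrightarrow> cF n r A i \<inter> cG n r A n = cF n r A i"
  using lab_props(1) unfolding cF_def cG_def Coord_Int cells_def
  by (intro arg_cong[where f = Coord]) fastforce

lemma cG_n: "A \<in> Theta n r \<Longrightarrow> cF n r A n \<inter> cG n r A j = cG n r A j"
  using lab_props(1) unfolding cF_def cG_def Coord_Int cells_def
  by (intro arg_cong[where f = Coord]) fastforce

lemma cF_flag: assumes A: "A \<in> Theta n r" shows "is_flag n r (ro n A) (cF n r A)"
proof -
  have d: "cdim (cF n r A i) = D A i n" if "i \<le> n" for i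
    using cFG_dim[OF A that order_refl] cF_n[OF A] by simp
  have "cF n r A 0 = {0}"
    using lab_props(1)[OF A] unfolding cF_def cells_def zero_Coord
    by (intro arg_cong[where f = Coord]) fastforce
  moreover have "cF n r A n = Vsp r"
    using lab_props(1)[OF A] unfolding cF_def cells_def Vsp_Coord
    by (intro arg_cong[where f = Coord]) fastforce
  moreover have "cdim (cF n r A i) = cdim (cF n r A (i - 1)) + ro n A i" if "i \<in> {1..n}" for i
  proof -
    have "i - 1 \<le> n" "i \<le> n" using that by auto
    then show ?thesis using d[of i] d[of "i - 1"] that D_Suc1[of A "i - 1" n] by (simp add: ro_def)
  qed
  moreover have "cF n r A (i - 1) \<subseteq> cF n r A i" for i
    unfolding cF_def by (rule Coord_mono) auto
  ultimately show ?thesis unfolding is_flag_def by (auto simp: cF_def csub_Coord)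
qed

lemma cG_flag: assumes A: "A \<in> Theta n r" shows "is_flag n r (co n A) (cG n r A)"
proof -
  have d: "cdim (cG n r A i) = D A n i" if "i \<le> n" for i
    using cFG_dim[OF A order_refl that] cG_n[OF A] by simp
  have "cG n r A 0 = {0}"
    using lab_props(1)[OF A] unfolding cG_def cells_def zero_Coord
    by (intro arg_cong[where f = Coord]) fastforce
  moreover have "cG n r A n = Vsp r"
    using lab_props(1)[OF A] unfolding cG_def cells_def Vsp_Coord
    by (intro arg_cong[where f = Coord]) fastforce
  moreover have "cdim (cG n r A i) = cdim (cG n r A (i - 1)) + co n A i" if "i \<in> {1..n}" for i
  proof -
    have "i - 1 \<le> n" "i \<le> n" using that by auto
    then show ?thesis using d[of i] d[of "i - 1"] that D_Suc2[of A n "i - 1"] by (simp add: co_def)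
  qed
  moreover have "cG n r A (i - 1) \<subseteq> cG n r A i" for i
    unfolding cG_def by (rule Coord_mono) auto
  ultimately show ?thesis unfolding is_flag_def by (auto simp: cG_def csub_Coord)
qed

lemma cFG_relpos: assumes A: "A \<in> Theta n r" shows "relpos n (cF n r A) (cG n r A) = A"
proof (rule D_determines[OF relpos_supp Theta_supp[OF A]])
  fix i j assume "i \<le> n" "j \<le> n"
  then show "D (relpos n (cF n r A) (cG n r A)) i j = D A i j"
    using relpos_D[OF cF_flag[OF A] cG_flag[OF A]] cFG_dim[OF A] by metis
qed


lemma nat_max_int: "int (max (b::nat) (a - w)) = max (int b) (int a - int w)"
  by (cases "w \<le> a") (auto simp: max_def of_nat_diff)

lemma DH:
  assumes U: "csub U" "U \<subseteq> Vsp N" and B: "csub B" and W: "csub W" "B \<subseteq> W" "W \<subseteq> Vsp N"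
    and H: "csub H" "B \<subseteq> H" "H \<subseteq> W"
    and g: "cdim (ssum (U \<inter> W) B \<inter> H) = max (cdim B) (cdim (ssum (U \<inter> W) B) + cdim H - cdim W)"
  shows "int (cdim (U \<inter> H)) = int (cdim (U \<inter> B)) + max 0 (int (cdim (U \<inter> W)) - int (cdim (U \<inter> B)) + int (cdim H) - int (cdim W))"
proof -
  let ?X = "U \<inter> W" let ?U' = "ssum ?X B"
  have sX: "csub ?X" "?X \<subseteq> Vsp N" using U W csub_Int by auto
  have BN: "B \<subseteq> Vsp N" and HN: "H \<subseteq> Vsp N" using W H by auto
  have sXH: "csub (?X \<inter> H)" "?X \<inter> H \<subseteq> Vsp N" using sX H csub_Int by auto
  have a: "U \<inter> H = ?X \<inter> H" using H by auto
  have b: "?U' \<inter> H = ssum (?X \<inter> H) B"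
  proof
    show "ssum (?X \<inter> H) B \<subseteq> ?U' \<inter> H"
    proof (rule ssum_le)
      show "csub (?U' \<inter> H)" using csub_Int csub_ssum sX B H by blast
      show "?X \<inter> H \<subseteq> ?U' \<inter> H" using ssum_ge1[OF B, of ?X] by blast
      show "B \<subseteq> ?U' \<inter> H" using ssum_ge2[OF sX(1), of B] H by blast
    qed
    show "?U' \<inter> H \<subseteq> ssum (?X \<inter> H) B"
    proof
      fix v assume v: "v \<in> ?U' \<inter> H"
      then obtain x b where xb: "v = x + b" "x \<in> ?X" "b \<in> B" unfolding ssum_def by blast
      have "x = v - b" using xb by simp
      moreover have "v - b \<in> H"
        by (rule cs.subspace_diff) (use v xb H in \<open>auto simp: csub_cs\<close>)
      ultimately have "x \<in> ?X \<inter> H" using xb by simp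
      then show "v \<in> ssum (?X \<inter> H) B" using xb unfolding ssum_def by blast
    qed
  qed
  have c: "(?X \<inter> H) \<inter> B = U \<inter> B" and c': "?X \<inter> B = U \<inter> B" using H W by auto
  have d: "cdim (?U' \<inter> H) + cdim (U \<inter> B) = cdim (?X \<inter> H) + cdim B"
    using grassmann[OF sXH(1) B sXH(2) BN] b c by simp
  have e: "cdim ?U' + cdim (U \<inter> B) = cdim ?X + cdim B"
    using grassmann[OF sX(1) B sX(2) BN] c' by simp
  have g': "int (cdim (?U' \<inter> H)) = max (int (cdim B)) (int (cdim ?U') + int (cdim H) - int (cdim W))"
    using g nat_max_int[of "cdim B" "cdim ?U' + cdim H" "cdim W"] by simp
  show ?thesis using a d e g' by (simp add: max_def split: if_splits)
qed

lemma block_exists':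
  assumes "is_decomp n p" "1 \<le> j" "j \<le> n"
  shows "\<exists>t<length p. ps p t < j \<and> j \<le> ps p (Suc t)"
proof -
  have "1 \<le> k \<Longrightarrow> j \<le> ps p k \<Longrightarrow> \<exists>t<k. ps p t < j \<and> j \<le> ps p (Suc t)" for k
  proof (induct k)
    case 0 then show ?case by simp
  next
    case (Suc k)
    show ?case
    proof (cases "k \<ge> 1 \<and> j \<le> ps p k")
      case True then show ?thesis using Suc by (meson less_Suc_eq)
    next
      case False then show ?thesis using Suc(3) assms(2) by (intro exI[of _ k]) (cases k; auto)
    qed
  qed
  moreover have "length p \<ge> 1" using assms unfolding is_decomp_def by (cases p) auto
  ultimately show ?thesis using assms ps_n by metis
qed

definition blkof :: "nat list \<Rightarrow> nat \<Rightarrow> nat" where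
  "blkof p j = (THE t. t < length p \<and> ps p t < j \<and> j \<le> ps p (Suc t))"

lemma blkof:
  assumes "is_decomp n p" "1 \<le> j" "j \<le> n"
  shows "blkof p j < length p" "ps p (blkof p j) < j" "j \<le> ps p (Suc (blkof p j))"
proof -
  obtain t where t: "t < length p" "ps p t < j" "j \<le> ps p (Suc t)" using block_exists'[OF assms] by blast
  have "blkof p j = t" unfolding blkof_def
    by (rule the_equality) (use t block_unique[OF assms(1)] in blast)+
  then show "blkof p j < length p" "ps p (blkof p j) < j" "j \<le> ps p (Suc (blkof p j))" using t by auto
qed

lemma blkof_eq:
  assumes "is_decomp n p" "t < length p" "ps p t < j" "j \<le> ps p (Suc t)"
  shows "blkof p j = t"
  unfolding blkof_def
  by (rule the_equality) (use assms block_unique[OF assms(1)] in blast)+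

definition UUt :: "(nat \<Rightarrow> vect set) \<Rightarrow> nat list \<Rightarrow> vect set set \<Rightarrow> nat \<Rightarrow> vect set set" where
  "UUt G p XX t = (\<lambda>U. ssum (U \<inter> G (ps p (Suc t))) (G (ps p t))) ` XX"

definition mt :: "(nat \<Rightarrow> vect set) \<Rightarrow> nat list \<Rightarrow> nat \<Rightarrow> nat" where
  "mt G p t = cdim (G (ps p (Suc t))) - cdim (G (ps p t))"

definition chainP :: "(nat \<Rightarrow> vect set) \<Rightarrow> nat list \<Rightarrow> vect set set \<Rightarrow> nat \<Rightarrow> (nat \<Rightarrow> vect set) \<Rightarrow> bool" where
  "chainP G p XX t Hs \<longleftrightarrow> Hs 0 = G (ps p t) \<and> (\<forall>j < mt G p t. Hs j \<subseteq> Hs (Suc j)) \<and>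
     (\<forall>j \<le> mt G p t. good (G (ps p t)) (G (ps p (Suc t))) (UUt G p XX t) (Hs j) \<and> cdim (Hs j) = cdim (G (ps p t)) + j)"

definition HS :: "(nat \<Rightarrow> vect set) \<Rightarrow> nat list \<Rightarrow> vect set set \<Rightarrow> nat \<Rightarrow> nat \<Rightarrow> vect set" where
  "HS G p XX t = (SOME Hs. chainP G p XX t Hs)"

definition Hc :: "(nat \<Rightarrow> vect set) \<Rightarrow> nat list \<Rightarrow> vect set set \<Rightarrow> nat \<Rightarrow> vect set" where
  "Hc G p XX j = (if j = 0 then G 0 else HS G p XX (blkof p j) (cdim (G j) - cdim (G (ps p (blkof p j)))))"

context
  fixes n r :: nat and lam :: comp and G :: "nat \<Rightarrow> vect set" and p :: "nat list" and XX :: "vect set set"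
  assumes Gf: "is_flag n r lam G" and dec: "is_decomp n p" and npos: "0 < n"
    and XXf: "finite XX" and XX: "\<And>U. U \<in> XX \<Longrightarrow> csub U \<and> U \<subseteq> Vsp r"
begin

lemma blk_props:
  assumes "t < length p"
  shows "csub (G (ps p t))" "csub (G (ps p (Suc t)))" "G (ps p t) \<subseteq> G (ps p (Suc t))"
    "G (ps p (Suc t)) \<subseteq> Vsp r" "cdim (G (ps p t)) \<le> cdim (G (ps p (Suc t)))"
proof -
  have le: "ps p t \<le> ps p (Suc t)" "ps p (Suc t) \<le> n" using ps_le_Suc ps_le_n[OF dec] by auto
  show "csub (G (ps p t))" "csub (G (ps p (Suc t)))" "G (ps p (Suc t)) \<subseteq> Vsp r"
    using flag_props[OF Gf] le by auto
  show "G (ps p t) \<subseteq> G (ps p (Suc t))" using flag_mono[OF Gf] le by auto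
  then show "cdim (G (ps p t)) \<le> cdim (G (ps p (Suc t)))"
    using dim_mono' \<open>csub (G (ps p t))\<close> \<open>G (ps p (Suc t)) \<subseteq> Vsp r\<close> by blast
qed

lemma UUt_props:
  assumes "t < length p" "U' \<in> UUt G p XX t"
  shows "csub U' \<and> G (ps p t) \<subseteq> U' \<and> U' \<subseteq> G (ps p (Suc t))"
proof -
  obtain U where U: "U \<in> XX" "U' = ssum (U \<inter> G (ps p (Suc t))) (G (ps p t))"
    using assms(2) unfolding UUt_def by auto
  note b = blk_props[OF assms(1)]
  have c: "csub (U \<inter> G (ps p (Suc t)))" using XX[OF U(1)] b csub_Int by blast
  have "csub U'" using U(2) c b csub_ssum by blast
  moreover have "G (ps p t) \<subseteq> U'" using U(2) ssum_ge2[OF c] by blast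
  moreover have "U' \<subseteq> G (ps p (Suc t))" unfolding U(2) by (rule ssum_le) (use b in auto)
  ultimately show ?thesis by blast
qed

lemma good_unf:
  assumes "t < length p"
  shows "good (G (ps p t)) (G (ps p (Suc t))) (UUt G p XX t) H \<longleftrightarrow>
    csub H \<and> G (ps p t) \<subseteq> H \<and> H \<subseteq> G (ps p (Suc t)) \<and>
    (\<forall>U\<in>UUt G p XX t. cdim (U \<inter> H) = max (cdim (G (ps p t))) (cdim U + cdim H - cdim (G (ps p (Suc t)))))"
  by (rule good_def[OF blk_props(1,2,3,4)[OF assms]]) (use XXf UUt_props[OF assms] in \<open>auto simp: UUt_def\<close>)

lemma HS_chain: "t < length p \<Longrightarrow> chainP G p XX t (HS G p XX t)"
proof -
  assume t: "t < length p"
  note b = blk_props[OF t]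
  have "\<exists>Hs. chainP G p XX t Hs"
    unfolding chainP_def mt_def
    by (rule good_chain[OF b(1,2,3,4)]) (use XXf UUt_props[OF t] in \<open>auto simp: UUt_def\<close>)
  then show ?thesis unfolding HS_def by (rule someI_ex)
qed

lemma HS_good: "t < length p \<Longrightarrow> j \<le> mt G p t \<Longrightarrow>
   good (G (ps p t)) (G (ps p (Suc t))) (UUt G p XX t) (HS G p XX t j) \<and> cdim (HS G p XX t j) = cdim (G (ps p t)) + j"
  using HS_chain unfolding chainP_def by blast

lemma HS_good':
  assumes "t < length p" "j \<le> mt G p t"
  shows "csub (HS G p XX t j)" "G (ps p t) \<subseteq> HS G p XX t j" "HS G p XX t j \<subseteq> G (ps p (Suc t))"
    "\<forall>U\<in>UUt G p XX t. cdim (U \<inter> HS G p XX t j) = max (cdim (G (ps p t))) (cdim U + cdim (HS G p XX t j) - cdim (G (ps p (Suc t))))"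
  using HS_good[OF assms] good_unf[OF assms(1)] by blast+


lemma HS_mono:
  assumes "t < length p" "j1 \<le> j2" "j2 \<le> mt G p t"
  shows "HS G p XX t j1 \<subseteq> HS G p XX t j2"
  using assms(2,3)
proof (induct j2)
  case 0 then show ?case by simp
next
  case (Suc j2)
  show ?case
  proof (cases "j1 = Suc j2")
    case True then show ?thesis by simp
  next
    case False
    then have "HS G p XX t j1 \<subseteq> HS G p XX t j2" using Suc by auto
    moreover have "HS G p XX t j2 \<subseteq> HS G p XX t (Suc j2)"
      using HS_chain[OF assms(1)] Suc(3) unfolding chainP_def by auto
    ultimately show ?thesis by blast
  qed
qed

lemma HS_0: "t < length p \<Longrightarrow> HS G p XX t 0 = G (ps p t)"
  using HS_chain unfolding chainP_def by blast

lemma HS_top: assumes t: "t < length p" shows "HS G p XX t (mt G p t) = G (ps p (Suc t))"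
proof (rule dim_eq_sub)
  note b = blk_props[OF t]
  note h = HS_good'[OF t order_refl]
  show "csub (HS G p XX t (mt G p t))" "csub (G (ps p (Suc t)))"
    "HS G p XX t (mt G p t) \<subseteq> G (ps p (Suc t))" "G (ps p (Suc t)) \<subseteq> Vsp r"
    using h b by auto
  show "cdim (G (ps p (Suc t))) \<le> cdim (HS G p XX t (mt G p t))"
    using HS_good[OF t order_refl] b(5) unfolding mt_def by simp
qed

lemma Gdim_mono: "j1 \<le> j2 \<Longrightarrow> j2 \<le> n \<Longrightarrow> cdim (G j1) \<le> cdim (G j2)"
  using dim_mono' flag_mono[OF Gf] flag_props[OF Gf] by (meson le_trans)

lemma Hc_block:
  assumes t: "t < length p" and j: "ps p t \<le> j" "j \<le> ps p (Suc t)"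
  shows "Hc G p XX j = HS G p XX t (cdim (G j) - cdim (G (ps p t)))"
proof (cases "ps p t < j")
  case True
  have "blkof p j = t" using blkof_eq[OF dec t True j(2)] .
  then show ?thesis using True unfolding Hc_def by auto
next
  case False
  then have jt: "j = ps p t" using j by simp
  show ?thesis
  proof (cases t)
    case 0
    then show ?thesis using jt HS_0[OF t] unfolding Hc_def by simp
  next
    case (Suc t')
    have t': "t' < length p" using t Suc by simp
    have pos: "ps p t' < ps p t" using ps_strict[OF dec t'] Suc by simp
    then have "blkof p j = t'" using blkof_eq[OF dec t' _ ] jt Suc by simp
    moreover have "j \<noteq> 0" using pos jt by simp
    ultimately have "Hc G p XX j = HS G p XX t' (mt G p t')" unfolding Hc_def mt_def using jt Suc by simp
    also have "\<dots> = G j" using HS_top[OF t'] jt Suc by simp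
    also have "\<dots> = HS G p XX t (cdim (G j) - cdim (G (ps p t)))" using HS_0[OF t] jt by simp
    finally show ?thesis .
  qed
qed

lemma some_block:
  assumes "j \<le> n" obtains t where "t < length p" "ps p t \<le> j" "j \<le> ps p (Suc t)"
  using block_exists[OF dec npos assms] by blast

lemma Hc_in_block:
  assumes t: "t < length p" and j: "ps p t \<le> j" "j \<le> ps p (Suc t)"
  shows "cdim (G j) - cdim (G (ps p t)) \<le> mt G p t"
    "cdim (Hc G p XX j) = cdim (G j)"
proof -
  have hn: "ps p (Suc t) \<le> n" using ps_le_n[OF dec] by blast
  show k: "cdim (G j) - cdim (G (ps p t)) \<le> mt G p t"
    unfolding mt_def using Gdim_mono[OF j(2) hn] by simp
  show "cdim (Hc G p XX j) = cdim (G j)"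
    using Hc_block[OF assms] HS_good[OF t k] Gdim_mono[OF j(1)] j hn by simp
qed

lemma Hc_dim: "j \<le> n \<Longrightarrow> cdim (Hc G p XX j) = cdim (G j)"
  by (metis some_block Hc_in_block(2))

lemma Hc_bd: "t \<le> length p \<Longrightarrow> Hc G p XX (ps p t) = G (ps p t)"
proof -
  assume t: "t \<le> length p"
  show ?thesis
  proof (cases "t < length p")
    case True
    then show ?thesis using Hc_block[OF True order_refl ps_le_Suc] HS_0[OF True] by simp
  next
    case False
    then have tl: "t = length p" using t by simp
    obtain t' where t': "length p = Suc t'" using dec npos unfolding is_decomp_def by (cases p) auto
    have "t' < length p" using t' by simp
    then have "Hc G p XX (ps p (Suc t')) = HS G p XX t' (mt G p t')"
      using Hc_block[of t' "ps p (Suc t')"] ps_le_Suc unfolding mt_def by simp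
    then show ?thesis using HS_top[OF \<open>t' < length p\<close>] tl t' by simp
  qed
qed

lemma Hc_flag: "is_flag n r lam (Hc G p XX)"
  unfolding is_flag_def
proof (intro conjI ballI)
  show "Hc G p XX 0 = {0}" using flag_0[OF Gf] unfolding Hc_def by simp
  show "Hc G p XX n = Vsp r" using Hc_bd[of "length p"] ps_n[OF dec] flag_n[OF Gf] by simp
  fix i assume i: "i \<in> {1..n}"
  obtain t where t: "t < length p" "ps p t < i" "i \<le> ps p (Suc t)"
    using block_exists'[OF dec] i by force
  have k1: "cdim (G i) - cdim (G (ps p t)) \<le> mt G p t" using Hc_in_block[OF t(1)] t by simp
  have k0: "cdim (G (i - 1)) - cdim (G (ps p t)) \<le> cdim (G i) - cdim (G (ps p t))"
    using Gdim_mono[of "i - 1" i] i by auto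
  show "csub (Hc G p XX i)" using Hc_block[OF t(1)] t HS_good'(1)[OF t(1) k1] by simp
  show "Hc G p XX (i - 1) \<subseteq> Hc G p XX i"
    using Hc_block[OF t(1), of i] Hc_block[OF t(1), of "i - 1"] t HS_mono[OF t(1) k0 k1] by simp
  show "cdim (Hc G p XX i) = cdim (Hc G p XX (i - 1)) + lam i"
    using Hc_dim[of i] Hc_dim[of "i - 1"] i Gf unfolding is_flag_def by auto
qed

lemma Hc_formula:
  assumes U: "U \<in> XX" and t: "t < length p" and j: "ps p t \<le> j" "j \<le> ps p (Suc t)"
  shows "int (cdim (U \<inter> Hc G p XX j)) = int (cdim (U \<inter> G (ps p t))) +
     max 0 (int (cdim (U \<inter> G (ps p (Suc t)))) - int (cdim (U \<inter> G (ps p t))) + int (cdim (Hc G p XX j))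
       - int (cdim (G (ps p (Suc t)))))"
proof -
  note b = blk_props[OF t]
  have k: "cdim (G j) - cdim (G (ps p t)) \<le> mt G p t" using Hc_in_block(1)[OF t j] .
  note h = HS_good'[OF t k]
  have eq: "Hc G p XX j = HS G p XX t (cdim (G j) - cdim (G (ps p t)))" using Hc_block[OF t j] .
  have "ssum (U \<inter> G (ps p (Suc t))) (G (ps p t)) \<in> UUt G p XX t" using U unfolding UUt_def by blast
  then have g: "cdim (ssum (U \<inter> G (ps p (Suc t))) (G (ps p t)) \<inter> Hc G p XX j) =
    max (cdim (G (ps p t))) (cdim (ssum (U \<inter> G (ps p (Suc t))) (G (ps p t))) + cdim (Hc G p XX j) - cdim (G (ps p (Suc t))))"
    using h(4) eq by simp
  show ?thesis
    by (rule DH[OF _ _ b(1) b(2) b(3) b(4) _ _ _ g]) (use XX[OF U] h eq in auto)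
qed

end


lemma relpos_co:
  assumes F: "is_flag n r a F" and G: "is_flag n r b G" and b: "\<And>j. b j \<noteq> 0 \<Longrightarrow> j \<in> {1..n}"
  shows "co n (relpos n F G) = b"
proof
  fix j show "co n (relpos n F G) j = b j"
  proof (cases "j \<in> {1..n}")
    case True
    have e: "cdim (F n \<inter> G k) = cdim (G k)" if "k \<le> n" for k
      using flag_n[OF F] flag_props(2)[OF G that] by (simp add: Int_absorb1)
    have "int (co n (relpos n F G) j) = int (D (relpos n F G) n j) - D (relpos n F G) n (j - 1)"
      using co_D True by auto
    also have "\<dots> = int (cdim (G j)) - cdim (G (j - 1))"
      using relpos_D[OF F G, of n j] relpos_D[OF F G, of n "j - 1"] e[of j] e[of "j - 1"] True by auto
    also have "\<dots> = b j" using G True unfolding is_flag_def by auto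
    finally show ?thesis by simp
  next
    case False
    then have "b j = 0" using b[of j] by blast
    then show ?thesis using False by (auto simp: co_def relpos_def)
  qed
qed

lemma relpos_ro:
  assumes F: "is_flag n r a F" and G: "is_flag n r b G" and a: "\<And>j. a j \<noteq> 0 \<Longrightarrow> j \<in> {1..n}"
  shows "ro n (relpos n F G) = a"
proof
  fix j show "ro n (relpos n F G) j = a j"
  proof (cases "j \<in> {1..n}")
    case True
    have e: "cdim (F k \<inter> G n) = cdim (F k)" if "k \<le> n" for k
      using flag_n[OF G] flag_props(2)[OF F that] by (simp add: Int_absorb2)
    have "int (ro n (relpos n F G) j) = int (D (relpos n F G) j n) - D (relpos n F G) (j - 1) n"
      using ro_D True by auto
    also have "\<dots> = int (cdim (F j)) - cdim (F (j - 1))"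
      using relpos_D[OF F G, of j n] relpos_D[OF F G, of "j - 1" n] e[of j] e[of "j - 1"] True by auto
    also have "\<dots> = a j" using F True unfolding is_flag_def by auto
    finally show ?thesis by simp
  next
    case False
    then have "a j = 0" using a[of j] by blast
    then show ?thesis using False by (auto simp: ro_def relpos_def)
  qed
qed

lemma relpos_Theta:
  assumes F: "is_flag n r a F" and G: "is_flag n r b G"
  shows "relpos n F G \<in> Theta n r"
proof -
  have "D (relpos n F G) n n = r"
    using relpos_D[OF F G, of n n] flag_n[OF F] flag_n[OF G] cdim_Coord[of "{..<r}"]
    by (simp add: Vsp_Coord)
  then show ?thesis using relpos_supp[of n F G] unfolding Theta_def supp_def D_def by auto
qed

lemma D_diag: "D (diagm lam) i j = (\<Sum>k=1..min i j. lam k)"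
proof -
  have "D (diagm lam) i j = (\<Sum>k=1..i. if k \<le> j then lam k else 0)"
    unfolding D_def diagm_def
    by (rule sum.cong[OF refl]) (auto simp: sum.delta'[of "{1..j}", simplified])
  also have "\<dots> = (\<Sum>k=1..min i j. lam k)"
    apply (induct i) apply (auto simp: min_def)
    by (metis le_antisym not_less_eq_eq)
  finally show ?thesis .
qed

lemma gprod_char:
  assumes "occurs n r A B C0" "\<And>C'. occurs n r A B C' \<Longrightarrow> C' \<noteq> C0 \<Longrightarrow> stabdim n C0 < stabdim n C'"
  shows "gprod n r A B = C0"
  unfolding gprod_def
proof (rule the_equality)
  show "occurs n r A B C0 \<and> (\<forall>C'. occurs n r A B C' \<and> C' \<noteq> C0 \<longrightarrow> stabdim n C0 < stabdim n C')"
    using assms by blast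
  fix C1 assume C1: "occurs n r A B C1 \<and> (\<forall>C'. occurs n r A B C' \<and> C' \<noteq> C1 \<longrightarrow> stabdim n C1 < stabdim n C')"
  show "C1 = C0"
  proof (rule ccontr)
    assume ne: "C1 \<noteq> C0"
    then have "stabdim n C0 < stabdim n C1" using assms(2) C1 by blast
    moreover have "stabdim n C1 < stabdim n C0" using C1 ne assms(1) by blast
    ultimately show False by simp
  qed
qed

lemma samedata_sym: "samedata n p M M' \<Longrightarrow> samedata n p M' M"
  unfolding samedata_def by auto

lemma samedata_trans: "samedata n p M M' \<Longrightarrow> samedata n p M' M'' \<Longrightarrow> samedata n p M M''"
  unfolding samedata_def by auto

lemma Lam_supp: "lam \<in> Lam n r \<Longrightarrow> lam j \<noteq> 0 \<Longrightarrow> j \<in> {1..n}"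
  unfolding Lam_def by auto

lemma Theta_ro_supp: "A \<in> Theta n r \<Longrightarrow> ro n A j \<noteq> 0 \<Longrightarrow> j \<in> {1..n}"
  unfolding Theta_def ro_def by (auto intro: ccontr[of "j \<in> {1..n}"] elim!: sum.not_neutral_contains_not_neutral)

lemma Theta_co_supp: "A \<in> Theta n r \<Longrightarrow> co n A j \<noteq> 0 \<Longrightarrow> j \<in> {1..n}"
  unfolding Theta_def co_def by (auto elim!: sum.not_neutral_contains_not_neutral)

lemma flag_Int_nested:
  assumes "is_flag n r lam G" "i \<le> n" "j \<le> n"
  shows "G i \<inter> G j = G (min i j)"
proof (cases "i \<le> j")
  case True then show ?thesis using flag_mono[OF assms(1) True assms(3)] by (auto simp: min_def)
next
  case False then show ?thesis using flag_mono[OF assms(1), of j i] assms by (auto simp: min_def)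
qed

lemma occ_samedata:
  assumes occ: "occurs n r A OM C'" and sdO: "samedata n p OM (diagm lam)"
    and coA: "co n A = lam" and coO: "co n OM = lam" and dec: "is_decomp n p"
  shows "samedata n p C' A"
proof -
  obtain F G H where F: "is_flag n r (ro n A) F" and G: "is_flag n r lam G" and H: "is_flag n r lam H"
    and FG: "relpos n F G = A" and GH: "relpos n G H = OM" and FH: "relpos n F H = C'"
    using occ coA coO unfolding occurs_def by metis
  have GHb: "G (ps p t) = H (ps p t)" if t: "t \<le> length p" for t
  proof -
    let ?b = "ps p t"
    have b: "?b \<le> n" using ps_le_n[OF dec] .
    have "cdim (G ?b \<inter> H ?b) = D OM ?b ?b" using relpos_D[OF G H b b] GH by simp
    also have "\<dots> = D (diagm lam) ?b ?b" using sdO t b unfolding samedata_def by auto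
    also have "\<dots> = (\<Sum>k=1..?b. lam k)" by (simp add: D_diag)
    finally have d: "cdim (G ?b \<inter> H ?b) = (\<Sum>k=1..?b. lam k)" .
    have sG: "csub (G ?b)" "G ?b \<subseteq> Vsp r" and sH: "csub (H ?b)" "H ?b \<subseteq> Vsp r"
      using flag_props[OF G b] flag_props[OF H b] by auto
    have "G ?b \<inter> H ?b = G ?b"
      by (rule dim_eq_sub[OF csub_Int[OF sG(1) sH(1)] sG(1) _ sG(2)]) (use d flag_dim[OF G b] in auto)
    moreover have "G ?b \<inter> H ?b = H ?b"
      by (rule dim_eq_sub[OF csub_Int[OF sG(1) sH(1)] sH(1) _ sH(2)]) (use d flag_dim[OF H b] in auto)
    ultimately show ?thesis by simp
  qed
  have "D C' i (ps p t) = D A i (ps p t)" if "i \<le> n" "t \<le> length p" for i t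
    using relpos_D[OF F H that(1) ps_le_n[OF dec], of t] relpos_D[OF F G that(1) ps_le_n[OF dec], of t] FH FG GHb[OF that(2)]
    by simp
  moreover have "D C' n j = D A n j" if j: "j \<le> n" for j
  proof -
    have "D C' n j = cdim (F n \<inter> H j)" using relpos_D[OF F H order_refl j] FH by simp
    also have "\<dots> = cdim (H j)" using flag_n[OF F] flag_props(2)[OF H j] by (simp add: Int_absorb1)
    also have "\<dots> = cdim (G j)" using flag_dim[OF H j] flag_dim[OF G j] by simp
    also have "\<dots> = cdim (F n \<inter> G j)" using flag_n[OF F] flag_props(2)[OF G j] by (simp add: Int_absorb1)
    also have "\<dots> = D A n j" using relpos_D[OF F G order_refl j] FG by simp
    finally show ?thesis .
  qed
  ultimately show ?thesis unfolding samedata_def by auto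
qed


definition XXof :: "nat \<Rightarrow> nat \<Rightarrow> mat \<Rightarrow> vect set set" where
  "XXof n r A = (cF n r A ` {..n}) \<union> (cG n r A ` {..n})"

definition Hof :: "nat \<Rightarrow> nat \<Rightarrow> mat \<Rightarrow> nat list \<Rightarrow> nat \<Rightarrow> vect set" where
  "Hof n r A p = Hc (cG n r A) p (XXof n r A)"

context
  fixes n r :: nat and lam :: comp and p :: "nat list" and A :: mat
  assumes npos: "0 < n" and lamL: "lam \<in> Lam n r" and dec: "is_decomp n p"
    and AT: "A \<in> Theta n r" and coA: "co n A = lam"
begin

lemma Gf: "is_flag n r lam (cG n r A)" using cG_flag[OF AT] coA by simp
lemma Ff: "is_flag n r (ro n A) (cF n r A)" using cF_flag[OF AT] .

lemma XXf: "finite (XXof n r A)" unfolding XXof_def by simp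

lemma XXp: "U \<in> XXof n r A \<Longrightarrow> csub U \<and> U \<subseteq> Vsp r"
  unfolding XXof_def using flag_props[OF Gf] flag_props[OF Ff] by blast

lemma Hf: "is_flag n r lam (Hof n r A p)"
  unfolding Hof_def using Hc_flag[OF Gf dec npos XXf XXp] .

lemma H_bd: "t \<le> length p \<Longrightarrow> Hof n r A p (ps p t) = cG n r A (ps p t)"
  unfolding Hof_def using Hc_bd[OF Gf dec npos XXf XXp] .

lemma H_dim: "j \<le> n \<Longrightarrow> cdim (Hof n r A p j) = cdim (cG n r A j)"
  unfolding Hof_def using Hc_dim[OF Gf dec npos XXf XXp] .

context
  fixes K :: "nat \<Rightarrow> vect set" and kap :: comp
  assumes Kf: "is_flag n r kap K" and KX: "\<And>i. i \<le> n \<Longrightarrow> K i \<in> XXof n r A"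
begin

lemma gen_a: "i \<le> n \<Longrightarrow> t \<le> length p \<Longrightarrow> D (relpos n K (Hof n r A p)) i (ps p t) = cdim (K i \<inter> cG n r A (ps p t))"
  using relpos_D[OF Kf Hf, of i "ps p t"] ps_le_n[OF dec] H_bd by simp

lemma gen_b: "j \<le> n \<Longrightarrow> D (relpos n K (Hof n r A p)) n j = cdim (cG n r A j)"
  using relpos_D[OF Kf Hf order_refl, of j] flag_n[OF Kf] flag_props(2)[OF Hf, of j] H_dim
  by (simp add: Int_absorb1)

lemma gen_c: "cgform n p (relpos n K (Hof n r A p))"
  unfolding cgform_def
proof (intro allI impI)
  fix t i j assume t: "t < length p" and i: "i \<le> n" and j: "ps p t \<le> j \<and> j \<le> ps p (Suc t)"
  let ?M = "relpos n K (Hof n r A p)" and ?G = "cG n r A"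
  have hn: "ps p (Suc t) \<le> n" using ps_le_n[OF dec] .
  have jn: "j \<le> n" using j hn by simp
  have f: "int (cdim (K i \<inter> Hof n r A p j)) = int (cdim (K i \<inter> ?G (ps p t))) +
     max 0 (int (cdim (K i \<inter> ?G (ps p (Suc t)))) - int (cdim (K i \<inter> ?G (ps p t))) + int (cdim (Hof n r A p j))
       - int (cdim (?G (ps p (Suc t)))))"
    unfolding Hof_def using Hc_formula[OF Gf dec npos XXf XXp KX[OF i] t] j by blast
  have e1: "D ?M i j = cdim (K i \<inter> Hof n r A p j)" using relpos_D[OF Kf Hf i jn] by simp
  have e2: "D ?M i (ps p t) = cdim (K i \<inter> ?G (ps p t))" using gen_a i t by simp
  have e3: "D ?M i (ps p (Suc t)) = cdim (K i \<inter> ?G (ps p (Suc t)))" using gen_a i t by simp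
  have e4: "D ?M n j = cdim (Hof n r A p j)" using gen_b jn H_dim jn by simp
  have e5: "D ?M n (ps p (Suc t)) = cdim (?G (ps p (Suc t)))" using gen_b hn by simp
  show "int (D ?M i j) = int (D ?M i (ps p t)) + max 0 (int (D ?M i (ps p (Suc t))) - int (D ?M i (ps p t))
        + int (D ?M n j) - int (D ?M n (ps p (Suc t))))"
    using f e1 e2 e3 e4 e5 by simp
qed

end

definition OOf where "OOf = relpos n (cG n r A) (Hof n r A p)"
definition CCf where "CCf = relpos n (cF n r A) (Hof n r A p)"

lemma GX: "i \<le> n \<Longrightarrow> cG n r A i \<in> XXof n r A" unfolding XXof_def by auto
lemma FX: "i \<le> n \<Longrightarrow> cF n r A i \<in> XXof n r A" unfolding XXof_def by auto

lemma OO_cgform: "cgform n p OOf" unfolding OOf_def by (rule gen_c[OF Gf GX])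
lemma CC_cgform: "cgform n p CCf" unfolding CCf_def by (rule gen_c[OF Ff FX])

lemma OO_sd: "samedata n p OOf (diagm lam)"
  unfolding samedata_def
proof (intro conjI allI impI)
  fix i t assume i: "i \<le> n" and t: "t \<le> length p"
  have b: "ps p t \<le> n" using ps_le_n[OF dec] .
  show "D OOf i (ps p t) = D (diagm lam) i (ps p t)"
    unfolding OOf_def using gen_a[OF Gf GX i t] flag_Int_nested[OF Gf i b] flag_dim[OF Gf] D_diag i b
    by simp
next
  fix j assume j: "j \<le> n"
  show "D OOf n j = D (diagm lam) n j"
    unfolding OOf_def using gen_b[OF Gf GX j] flag_dim[OF Gf j] D_diag j by simp
qed

lemma CC_sd: "samedata n p CCf A"
  unfolding samedata_def
proof (intro conjI allI impI)
  fix i t assume i: "i \<le> n" and t: "t \<le> length p"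
  have b: "ps p t \<le> n" using ps_le_n[OF dec] .
  show "D CCf i (ps p t) = D A i (ps p t)"
    unfolding CCf_def using gen_a[OF Ff FX i t] cFG_dim[OF AT i b] by simp
next
  fix j assume j: "j \<le> n"
  show "D CCf n j = D A n j"
    unfolding CCf_def using gen_b[OF Ff FX j] cFG_dim[OF AT order_refl j] cG_n[OF AT] by simp
qed

lemma OO_co: "co n OOf = lam"
  unfolding OOf_def using relpos_co[OF Gf Hf] Lam_supp[OF lamL] by blast

lemma CC_occ: "occurs n r A OOf CCf"
  unfolding occurs_def
  by (rule exI[of _ "cF n r A"], rule exI[of _ "cG n r A"], rule exI[of _ "Hof n r A p"])
     (use Ff Gf Hf OO_co coA cFG_relpos[OF AT] in \<open>auto simp: OOf_def CCf_def\<close>)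

lemma gprod_CC: "gprod n r A OOf = CCf"
proof (rule gprod_char[OF CC_occ])
  fix C' assume occ: "occurs n r A OOf C'" and ne: "C' \<noteq> CCf"
  have sd: "samedata n p C' A" by (rule occ_samedata[OF occ OO_sd coA OO_co dec])
  have sC': "supp n C'" using occ unfolding occurs_def using relpos_supp by metis
  show "stabdim n CCf < stabdim n C'"
  proof (rule stab_min[OF dec npos])
    show "supp n CCf" unfolding CCf_def by (rule relpos_supp)
    show "supp n C'" by (rule sC')
    show "col_generic n p CCf" by (rule cgform_cg[OF dec _ CC_cgform]) (simp add: CCf_def relpos_supp)
    show "samedata n p CCf C'" using samedata_trans[OF CC_sd samedata_sym[OF sd]] .
    show "CCf \<noteq> C'" using ne by simp
  qed
qed

lemma CC_Theta: "CCf \<in> Theta n r" unfolding CCf_def by (rule relpos_Theta[OF Ff Hf])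
lemma CC_co: "co n CCf = lam" unfolding CCf_def using relpos_co[OF Ff Hf] Lam_supp[OF lamL] by blast
lemma CC_cg: "col_generic n p CCf" by (rule cgform_cg[OF dec _ CC_cgform]) (simp add: CCf_def relpos_supp)
lemma OO_cg: "col_generic n p OOf" by (rule cgform_cg[OF dec _ OO_cgform]) (simp add: OOf_def relpos_supp)
lemma OO_supp: "supp n OOf" by (simp add: OOf_def relpos_supp)
lemma OO_Theta: "OOf \<in> Theta n r" unfolding OOf_def by (rule relpos_Theta[OF Gf Hf])
lemma OO_ro: "ro n OOf = lam" unfolding OOf_def using relpos_ro[OF Gf Hf] Lam_supp[OF lamL] by blast

lemma CC_eq_A: "col_generic n p A \<Longrightarrow> CCf = A"
  by (rule cgform_unique[OF dec npos _ Theta_supp[OF AT] CC_cgform cg_cgform[OF dec] CC_sd])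
     (simp_all add: CCf_def relpos_supp)

end


lemma Rect_sd:
  assumes sd: "samedata n p M M'" and a: "1 \<le> a" "a \<le> n" and t: "t < length p"
  shows "Rect M (a - 1) a (ps p t) (ps p (Suc t)) = Rect M' (a - 1) a (ps p t) (ps p (Suc t))"
proof -
  have e: "D M i (ps p u) = D M' i (ps p u)" if "i \<le> n" "u \<le> length p" for i u
    using sd that unfolding samedata_def by auto
  have "int (Rect M (a - 1) a (ps p t) (ps p (Suc t))) = int (Rect M' (a - 1) a (ps p t) (ps p (Suc t)))"
    using Rect_D[of "a - 1" a "ps p t" "ps p (Suc t)"] ps_le_Suc[of p t]
      e[of a t] e[of "a - 1" t] e[of a "Suc t"] e[of "a - 1" "Suc t"] a t by simp
  then show ?thesis by simp
qed

lemma Rect_diag: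
  assumes "1 \<le> a"
  shows "Rect (diagm lam) (a - 1) a j1 j2 = (if j1 < a \<and> a \<le> j2 then lam a else 0)"
  using Rect_row[OF assms, of "diagm lam" j1 j2] by (simp add: diagm_def)

lemma blockdiag:
  assumes dec: "is_decomp n p" and sd: "samedata n p M (diagm lam)"
    and a: "1 \<le> a" "a \<le> n" and t: "t < length p" and b: "ps p t < b" "b \<le> ps p (Suc t)"
    and na: "\<not> (ps p t < a \<and> a \<le> ps p (Suc t))"
  shows "M a b = 0"
proof -
  have "M a b \<le> Rect M (a - 1) a (ps p t) (ps p (Suc t))" by (rule le_Rect) (use a b in auto)
  also have "\<dots> = Rect (diagm lam) (a - 1) a (ps p t) (ps p (Suc t))" by (rule Rect_sd[OF sd a t])
  also have "\<dots> = 0" using Rect_diag[OF a(1)] na by auto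
  finally show ?thesis by simp
qed

lemma sum_shift_block: "(\<Sum>b=1..m. f (s + b)) = (\<Sum>j\<in>{s<..s + m}. f j)"
  for f :: "nat \<Rightarrow> 'a::comm_monoid_add" and s m :: nat
proof -
  have "(\<Sum>b=1..m. f (s + b)) = (\<Sum>j=1 + s..m + s. f j)"
    using sum.shift_bounds_cl_nat_ivl[of f 1 s m] by (simp add: add.commute)
  also have "{1 + s..m + s} = {s<..s + m}" by auto
  finally show ?thesis .
qed

lemma is_decomp_single: "0 < m \<Longrightarrow> is_decomp m [m]"
  by (simp add: is_decomp_def)

lemma ps_single: "ps [m] 0 = 0" "ps [m] (Suc 0) = m"
  by (simp_all add: ps_def)

lemma D_full_ro: "D X i m = (\<Sum>k=1..i. ro m X k)" by (simp add: D_def ro_def)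
lemma D_full_co: "D X m j = (\<Sum>l=1..j. co m X l)"
  unfolding D_def co_def by (rule sum.swap)

lemma samedata_single:
  assumes "ro m X = ro m Y" "co m X = co m Y"
  shows "samedata m [m] X Y"
  unfolding samedata_def
proof (intro conjI allI impI)
  fix i t assume "i \<le> m" "t \<le> length [m]"
  then have "t = 0 \<or> t = 1" by auto
  then show "D X i (ps [m] t) = D Y i (ps [m] t)"
    using assms D_full_ro[of X i m] D_full_ro[of Y i m] by (auto simp: ps_single)
next
  fix j assume "j \<le> m"
  then show "D X m j = D Y m j" using assms D_full_co[of X m j] D_full_co[of Y m j] by simp
qed

definition Mb :: "mat \<Rightarrow> nat list \<Rightarrow> nat \<Rightarrow> mat" where
  "Mb OM p t = (\<lambda>a b. if a \<in> {1..p ! t} \<and> b \<in> {1..p ! t} then OM (ps p t + a) (ps p t + b) else 0)"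

context
  fixes n r :: nat and lam :: comp and p :: "nat list" and OM :: mat
  assumes npos: "0 < n" and lamL: "lam \<in> Lam n r" and dec: "is_decomp n p"
    and suO: "supp n OM" and cgO: "col_generic n p OM" and sdO: "samedata n p OM (diagm lam)"
    and roO: "ro n OM = lam" and coO: "co n OM = lam"
begin

lemma blk_basic:
  assumes t: "t < length p"
  shows "ps p (Suc t) = ps p t + p ! t" "0 < p ! t" "ps p t + p ! t \<le> n"
  using ps_Suc[OF t] ps_strict[OF dec t] ps_le_n[OF dec, of "Suc t"] by auto

lemma row_block:
  assumes t: "t < length p" and a: "a \<in> {ps p t<..ps p (Suc t)}"
  shows "(\<Sum>j\<in>{ps p t<..ps p (Suc t)}. OM a j) = lam a"
proof -
  have hn: "ps p (Suc t) \<le> n" using ps_le_n[OF dec] .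
  have an: "1 \<le> a" "a \<le> n" using a hn by auto
  have "(\<Sum>j\<in>{ps p t<..ps p (Suc t)}. OM a j) = (\<Sum>j=1..n. OM a j)"
  proof (rule sum.mono_neutral_left)
    show "finite {1..n}" by simp
    show "{ps p t<..ps p (Suc t)} \<subseteq> {1..n}" using hn by auto
    show "\<forall>j\<in>{1..n} - {ps p t<..ps p (Suc t)}. OM a j = 0"
    proof
      fix j assume j: "j \<in> {1..n} - {ps p t<..ps p (Suc t)}"
      then have j1: "1 \<le> j" "j \<le> n" by auto
      note bj = blkof[OF dec j1]
      have ne: "blkof p j \<noteq> t" using bj j by auto
      show "OM a j = 0"
      proof (rule blockdiag[OF dec sdO an bj])
        show "\<not> (ps p (blkof p j) < a \<and> a \<le> ps p (Suc (blkof p j)))"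
          using block_unique[OF dec t bj(1)] a ne by auto
      qed
    qed
  qed
  also have "\<dots> = lam a" using roO unfolding ro_def by metis
  finally show ?thesis .
qed

lemma col_block:
  assumes t: "t < length p" and b: "b \<in> {ps p t<..ps p (Suc t)}"
  shows "(\<Sum>i\<in>{ps p t<..ps p (Suc t)}. OM i b) = lam b"
proof -
  have hn: "ps p (Suc t) \<le> n" using ps_le_n[OF dec] .
  have "(\<Sum>i\<in>{ps p t<..ps p (Suc t)}. OM i b) = (\<Sum>i=1..n. OM i b)"
  proof (rule sum.mono_neutral_left)
    show "finite {1..n}" by simp
    show "{ps p t<..ps p (Suc t)} \<subseteq> {1..n}" using hn by auto
    show "\<forall>i\<in>{1..n} - {ps p t<..ps p (Suc t)}. OM i b = 0"
    proof
      fix i assume i: "i \<in> {1..n} - {ps p t<..ps p (Suc t)}"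
      show "OM i b = 0" by (rule blockdiag[OF dec sdO _ _ t]) (use i b in auto)
    qed
  qed
  also have "\<dots> = lam b" using coO unfolding co_def by metis
  finally show ?thesis .
qed

lemma Mb_ro: assumes t: "t < length p" shows "ro (p ! t) (Mb OM p t) = piece lam p t"
proof
  fix a
  note bb = blk_basic[OF t]
  show "ro (p ! t) (Mb OM p t) a = piece lam p t a"
  proof (cases "a \<in> {1..p ! t}")
    case True
    have "ro (p ! t) (Mb OM p t) a = (\<Sum>b=1..p ! t. OM (ps p t + a) (ps p t + b))"
      unfolding ro_def Mb_def using True by (intro sum.cong) auto
    also have "\<dots> = (\<Sum>j\<in>{ps p t<..ps p t + p ! t}. OM (ps p t + a) j)" by (rule sum_shift_block)
    also have "\<dots> = lam (ps p t + a)" using row_block[OF t, of "ps p t + a"] bb True by auto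
    finally show ?thesis using True by (simp add: piece_def)
  next
    case False then show ?thesis by (auto simp: ro_def Mb_def piece_def)
  qed
qed

lemma Mb_co: assumes t: "t < length p" shows "co (p ! t) (Mb OM p t) = piece lam p t"
proof
  fix b
  note bb = blk_basic[OF t]
  show "co (p ! t) (Mb OM p t) b = piece lam p t b"
  proof (cases "b \<in> {1..p ! t}")
    case True
    have "co (p ! t) (Mb OM p t) b = (\<Sum>a=1..p ! t. OM (ps p t + a) (ps p t + b))"
      unfolding co_def Mb_def using True by (intro sum.cong) auto
    also have "\<dots> = (\<Sum>i\<in>{ps p t<..ps p t + p ! t}. OM i (ps p t + b))"
      by (rule sum_shift_block[where f = "\<lambda>i. OM i (ps p t + b)"])
    also have "\<dots> = lam (ps p t + b)" using col_block[OF t, of "ps p t + b"] bb True by auto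
    finally show ?thesis using True by (simp add: piece_def)
  next
    case False then show ?thesis by (auto simp: co_def Mb_def piece_def)
  qed
qed

lemma Mb_supp: "supp (p ! t) (Mb OM p t)"
  unfolding supp_def Mb_def by auto

lemma Mb_Theta: assumes t: "t < length p" shows "Mb OM p t \<in> Theta (p ! t) (\<Sum>i=1..p ! t. piece lam p t i)"
proof -
  have "(\<Sum>i=1..p ! t. \<Sum>j=1..p ! t. Mb OM p t i j) = (\<Sum>i=1..p ! t. piece lam p t i)"
    using Mb_ro[OF t] unfolding ro_def by metis
  then show ?thesis using Mb_supp unfolding Theta_def supp_def by auto
qed

lemma Mb_cg: assumes t: "t < length p" shows "col_generic (p ! t) [p ! t] (Mb OM p t)"
proof -
  note bb = blk_basic[OF t]
  have g: "generic_sub {1..n} {ps p t + 1..ps p (Suc t)} OM" using cgO t unfolding col_generic_def by auto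
  have "generic_sub {1..p ! t} {1..p ! t} (Mb OM p t)"
    unfolding generic_sub_def
  proof (intro ballI impI)
    fix i k a b assume ik: "i \<in> {1..p ! t}" "k \<in> {1..p ! t}" and ab: "a \<in> {1..p ! t}" "b \<in> {1..p ! t}"
      and lt: "i < k \<and> a < b"
    have "OM (ps p t + i) (ps p t + a) * OM (ps p t + k) (ps p t + b) = 0"
      using g ik ab lt bb unfolding generic_sub_def by auto
    then show "Mb OM p t i a * Mb OM p t k b = 0" using ik ab unfolding Mb_def by simp
  qed
  then show ?thesis unfolding col_generic_def by (simp add: ps_single)
qed

lemma open_orb_Mb: assumes t: "t < length p" shows "open_orb (p ! t) (piece lam p t) = Mb OM p t"
  unfolding open_orb_def
proof (rule the_equality)
  let ?m = "p ! t" and ?mu = "piece lam p t"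
  have m: "0 < ?m" using blk_basic[OF t] by simp
  show "Mb OM p t \<in> Theta ?m (sum ?mu {1..?m}) \<and> ro ?m (Mb OM p t) = ?mu \<and> co ?m (Mb OM p t) = ?mu \<and>
    (\<forall>A'. A' \<in> Theta ?m (sum ?mu {1..?m}) \<and> ro ?m A' = ?mu \<and> co ?m A' = ?mu \<and> A' \<noteq> Mb OM p t
       \<longrightarrow> stabdim ?m (Mb OM p t) < stabdim ?m A')"
  proof (intro conjI allI impI)
    show "Mb OM p t \<in> Theta ?m (sum ?mu {1..?m})" using Mb_Theta[OF t] by simp
    show "ro ?m (Mb OM p t) = ?mu" using Mb_ro[OF t] .
    show "co ?m (Mb OM p t) = ?mu" using Mb_co[OF t] .
    fix A' assume A': "A' \<in> Theta ?m (sum ?mu {1..?m}) \<and> ro ?m A' = ?mu \<and> co ?m A' = ?mu \<and> A' \<noteq> Mb OM p t"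
    show "stabdim ?m (Mb OM p t) < stabdim ?m A'"
    proof (rule stab_min[OF is_decomp_single[OF m] m Mb_supp])
      show "supp ?m A'" using A' Theta_supp by blast
      show "col_generic ?m [?m] (Mb OM p t)" by (rule Mb_cg[OF t])
      show "samedata ?m [?m] (Mb OM p t) A'" by (rule samedata_single) (use A' Mb_ro[OF t] Mb_co[OF t] in auto)
      show "Mb OM p t \<noteq> A'" using A' by metis
    qed
  qed
  fix X assume X: "X \<in> Theta ?m (sum ?mu {1..?m}) \<and> ro ?m X = ?mu \<and> co ?m X = ?mu \<and>
    (\<forall>A'. A' \<in> Theta ?m (sum ?mu {1..?m}) \<and> ro ?m A' = ?mu \<and> co ?m A' = ?mu \<and> A' \<noteq> X
       \<longrightarrow> stabdim ?m X < stabdim ?m A')"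
  show "X = Mb OM p t"
  proof (rule ccontr)
    assume ne: "X \<noteq> Mb OM p t"
    have "stabdim ?m X < stabdim ?m (Mb OM p t)"
      using X ne Mb_Theta[OF t] Mb_ro[OF t] Mb_co[OF t] by auto
    moreover have "stabdim ?m (Mb OM p t) < stabdim ?m X"
    proof (rule stab_min[OF is_decomp_single[OF m] m Mb_supp])
      show "supp ?m X" using X Theta_supp by blast
      show "col_generic ?m [?m] (Mb OM p t)" by (rule Mb_cg[OF t])
      show "samedata ?m [?m] (Mb OM p t) X" by (rule samedata_single) (use X Mb_ro[OF t] Mb_co[OF t] in auto)
      show "Mb OM p t \<noteq> X" using ne by simp
    qed
    ultimately show False by simp
  qed
qed

lemma inblock_iff: "inblock p t a \<longleftrightarrow> ps p t < a \<and> a \<le> ps p (Suc t)"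
  by (simp add: inblock_def)

lemma oblk_eq: "o_blk lam p = OM"
proof (intro ext)
  fix a b
  show "o_blk lam p a b = OM a b"
  proof (cases "a \<in> {1..n} \<and> b \<in> {1..n}")
    case True
    then have a1: "1 \<le> a" "a \<le> n" and b1: "1 \<le> b" "b \<le> n" by auto
    let ?t = "blkof p a"
    note ba = blkof[OF dec a1]
    have only: "\<And>i. i < length p \<Longrightarrow> inblock p i a \<Longrightarrow> i = ?t"
      using block_unique[OF dec _ ba(1) _ _ ba(2,3)] unfolding inblock_def by blast
    have "o_blk lam p a b = (\<Sum>i<length p. if i = ?t then (if inblock p i a \<and> inblock p i b
       then open_orb (p ! i) (piece lam p i) (a - ps p i) (b - ps p i) else 0) else 0)"
      unfolding o_blk_def by (intro sum.cong refl) (use only in auto)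
    also have "\<dots> = (if inblock p ?t b then open_orb (p ! ?t) (piece lam p ?t) (a - ps p ?t) (b - ps p ?t) else 0)"
      using ba(1) ba(2,3) by (simp add: inblock_def)
    also have "\<dots> = OM a b"
    proof (cases "inblock p ?t b")
      case True
      note bb = blk_basic[OF ba(1)]
      have "open_orb (p ! ?t) (piece lam p ?t) (a - ps p ?t) (b - ps p ?t) = Mb OM p ?t (a - ps p ?t) (b - ps p ?t)"
        using open_orb_Mb[OF ba(1)] by simp
      also have "\<dots> = OM a b" using True ba bb unfolding Mb_def inblock_def by auto
      finally show ?thesis using True by simp
    next
      case False
      have "OM a b = 0"
      proof -
        note bt = blkof[OF dec b1]
        have "\<not> (ps p (blkof p b) < a \<and> a \<le> ps p (Suc (blkof p b)))"
          using False block_unique[OF dec ba(1) bt(1) ba(2,3)] bt unfolding inblock_def by auto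
        then show ?thesis using blockdiag[OF dec sdO a1 bt] by simp
      qed
      then show ?thesis using False by simp
    qed
    finally show ?thesis .
  next
    case False
    have "OM a b = 0" using suO False unfolding supp_def by blast
    moreover have "o_blk lam p a b = 0"
    proof -
      have "\<not> (inblock p i a \<and> inblock p i b)" if "i < length p" for i
        using False ps_le_n[OF dec, of "Suc i"] unfolding inblock_def by auto
      then show ?thesis unfolding o_blk_def by (intro sum.neutral) auto
    qed
    ultimately show ?thesis by simp
  qed
qed

end


definition tr :: "mat \<Rightarrow> mat" where "tr M = (\<lambda>i j. M j i)"

lemma tr_tr[simp]: "tr (tr M) = M" by (simp add: tr_def)
lemma tr_app[simp]: "tr M i j = M j i" by (simp add: tr_def)
lemma D_tr: "D (tr M) i j = D M j i" unfolding D_def tr_def by (rule sum.swap)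
lemma ro_tr: "ro n (tr M) = co n M" by (simp add: ro_def co_def tr_def)
lemma co_tr: "co n (tr M) = ro n M" by (simp add: ro_def co_def tr_def)
lemma supp_tr: "supp n (tr M) = supp n M" unfolding supp_def tr_def by blast
lemma Theta_tr: "tr M \<in> Theta n r \<longleftrightarrow> M \<in> Theta n r"
proof -
  have "(\<Sum>i=1..n. \<Sum>j=1..n. M j i) = (\<Sum>i=1..n. \<Sum>j=1..n. M i j)" by (rule sum.swap)
  then show ?thesis unfolding Theta_def tr_def by auto
qed
lemma relpos_tr: "relpos n G F = tr (relpos n F G)"
  unfolding relpos_def tr_def by (auto simp: fun_eq_iff ssum_comm Int_commute)
lemma stabdim_tr: "stabdim n (tr M) = stabdim n M"
proof -
  have "stabdim n (tr M) = (\<Sum>i=1..n. \<Sum>j=1..n. M j i * D M j i)" by (simp add: stabdim_D D_tr)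
  also have "\<dots> = (\<Sum>j=1..n. \<Sum>i=1..n. M j i * D M j i)" by (rule sum.swap)
  finally show ?thesis by (simp add: stabdim_D)
qed

lemma tr_inj: "tr M = tr M' \<Longrightarrow> M = M'" by (metis tr_tr)

lemma occurs_tr:
  assumes "occurs n r A B C"
  shows "occurs n r (tr B) (tr A) (tr C)"
proof -
  obtain F G H where F: "is_flag n r (ro n A) F" and G: "is_flag n r (co n A) G" and H: "is_flag n r (co n B) H"
    and FG: "relpos n F G = A" and GH: "relpos n G H = B" and FH: "relpos n F H = C"
    using assms unfolding occurs_def by blast
  have "co n A j \<noteq> 0 \<Longrightarrow> j \<in> {1..n}" for j
    using relpos_supp[of n F G] FG unfolding co_def supp_def
    by (auto elim!: sum.not_neutral_contains_not_neutral)
  then have "ro n B = co n A" using relpos_ro[OF G H] GH by blast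
  then show ?thesis unfolding occurs_def
    by (intro exI[of _ H] exI[of _ G] exI[of _ F])
       (use F G H FG GH FH in \<open>auto simp: ro_tr co_tr relpos_tr[of n _ F] relpos_tr[of n H G]\<close>)
qed

lemma occurs_tr_iff: "occurs n r A B C \<longleftrightarrow> occurs n r (tr B) (tr A) (tr C)"
  using occurs_tr[of n r A B C] occurs_tr[of n r "tr B" "tr A" "tr C"] by auto

lemma cg_tr:
  assumes dec: "is_decomp n p" and cg: "col_generic n p OM" and sd: "samedata n p OM (diagm lam)"
  shows "col_generic n p (tr OM)"
  unfolding col_generic_def generic_sub_def
proof (intro allI impI ballI)
  fix t i k s u
  assume t: "t < length p" and ik: "i \<in> {1..n}" "k \<in> {1..n}"
    and su: "s \<in> {ps p t + 1..ps p (Suc t)}" "u \<in> {ps p t + 1..ps p (Suc t)}" and lt: "i < k \<and> s < u"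
  have hn: "ps p (Suc t) \<le> n" using ps_le_n[OF dec] .
  have zero: "OM a b = 0" if a: "a \<in> {ps p t + 1..ps p (Suc t)}" and b: "b \<in> {1..n}"
      and nb: "\<not> (ps p t < b \<and> b \<le> ps p (Suc t))" for a b
  proof -
    have b1: "1 \<le> b" "b \<le> n" using b by auto
    note bb = blkof[OF dec b1]
    have a1: "1 \<le> a" "a \<le> n" using a hn by auto
    show ?thesis
    proof (rule blockdiag[OF dec sd a1 bb])
      show "\<not> (ps p (blkof p b) < a \<and> a \<le> ps p (Suc (blkof p b)))"
      proof
        assume "ps p (blkof p b) < a \<and> a \<le> ps p (Suc (blkof p b))"
        then have "blkof p b = t" using block_unique[OF dec bb(1) t] a by auto
        then show False using nb bb by auto
      qed
    qed
  qed
  show "tr OM i s * tr OM k u = 0"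
  proof (cases "ps p t < i \<and> i \<le> ps p (Suc t)")
    case False then show ?thesis using zero[OF su(1) ik(1)] by simp
  next
    case Ti: True
    show ?thesis
    proof (cases "ps p t < k \<and> k \<le> ps p (Suc t)")
      case False then show ?thesis using zero[OF su(2) ik(2)] by simp
    next
      case True
      have "OM s i * OM u k = 0"
        by (rule cg_contra[OF cg t _ _ _ _ _ _ dec]) (use su lt Ti True hn in auto)
      then show ?thesis by simp
    qed
  qed
qed

lemma row_col_generic: "row_generic n p M \<longleftrightarrow> col_generic n p (tr M)"
  unfolding row_generic_def col_generic_def generic_sub_def tr_def by blast

context
  fixes n r :: nat and lam :: comp and p :: "nat list" and A :: mat
  assumes npos: "0 < n" and lamL: "lam \<in> Lam n r" and dec: "is_decomp n p"
    and AT: "A \<in> Theta n r" and coA: "co n A = lam"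
begin

lemma CC_char: "occurs n r A (OOf n r p A) (CCf n r p A) \<and>
   (\<forall>C'. occurs n r A (OOf n r p A) C' \<and> C' \<noteq> CCf n r p A \<longrightarrow> stabdim n (CCf n r p A) < stabdim n C')"
proof (intro conjI allI impI)
  show "occurs n r A (OOf n r p A) (CCf n r p A)" by (rule CC_occ[OF npos lamL dec AT coA])
  fix C' assume a: "occurs n r A (OOf n r p A) C' \<and> C' \<noteq> CCf n r p A"
  then have occ: "occurs n r A (OOf n r p A) C'" and ne: "C' \<noteq> CCf n r p A" by auto
  have sd: "samedata n p C' A"
    by (rule occ_samedata[OF occ OO_sd[OF npos lamL dec AT coA] coA OO_co[OF npos lamL dec AT coA] dec])
  have sC': "supp n C'" using occ unfolding occurs_def using relpos_supp by metis
  show "stabdim n (CCf n r p A) < stabdim n C'"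
  proof (rule stab_min[OF dec npos])
    show "supp n (CCf n r p A)" by (simp add: CCf_def[OF npos lamL dec AT coA] relpos_supp)
    show "supp n C'" by (rule sC')
    show "col_generic n p (CCf n r p A)" by (rule CC_cg[OF npos lamL dec AT coA])
    show "samedata n p (CCf n r p A) C'"
      using samedata_trans[OF CC_sd[OF npos lamL dec AT coA] samedata_sym[OF sd]] .
    show "CCf n r p A \<noteq> C'" using ne by simp
  qed
qed

lemma OO_tr_sd: "samedata n p (tr (OOf n r p A)) (diagm lam)"
proof -
  note Gf' = Gf[OF npos lamL dec AT coA] and Hf' = Hf[OF npos lamL dec AT coA]
  note OOd = OOf_def[OF npos lamL dec AT coA]
  show ?thesis unfolding samedata_def
  proof (intro conjI allI impI)
    fix i t assume i: "i \<le> n" and t: "t \<le> length p"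
    have b: "ps p t \<le> n" using ps_le_n[OF dec] .
    have "D (tr (OOf n r p A)) i (ps p t) = cdim (cG n r A (ps p t) \<inter> Hof n r A p i)"
      using relpos_D[OF Gf' Hf' b i] OOd D_tr by simp
    also have "\<dots> = cdim (Hof n r A p (ps p t) \<inter> Hof n r A p i)"
      using H_bd[OF npos lamL dec AT coA t] by simp
    also have "\<dots> = (\<Sum>k=1..min i (ps p t). lam k)"
      using flag_Int_nested[OF Hf' b i] flag_dim[OF Hf'] b i by (simp add: min.commute)
    finally show "D (tr (OOf n r p A)) i (ps p t) = D (diagm lam) i (ps p t)" by (simp add: D_diag)
  next
    fix j assume j: "j \<le> n"
    have "D (tr (OOf n r p A)) n j = cdim (cG n r A j \<inter> Hof n r A p n)"
      using relpos_D[OF Gf' Hf' j order_refl] OOd D_tr by simp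
    also have "\<dots> = cdim (cG n r A j)"
      using flag_n[OF Hf'] flag_props(2)[OF Gf' j] by (simp add: Int_absorb2)
    also have "\<dots> = (\<Sum>k=1..j. lam k)" using flag_dim[OF Gf' j] .
    finally show "D (tr (OOf n r p A)) n j = D (diagm lam) n j" using j by (simp add: D_diag)
  qed
qed

lemma oblk_OO: "o_blk lam p = OOf n r p A"
  by (rule oblk_eq[OF npos lamL dec OO_supp OO_cg OO_sd OO_ro OO_co]; rule npos lamL dec AT coA)

lemma oblk_tr: "tr (o_blk lam p) = o_blk lam p"
proof -
  let ?O = "OOf n r p A"
  note ok = npos lamL dec AT coA
  have "o_blk lam p = tr ?O"
  proof (rule oblk_eq[OF npos lamL dec])
    show "supp n (tr ?O)" using OO_supp[OF ok] by (simp add: supp_tr)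
    show "col_generic n p (tr ?O)" by (rule cg_tr[OF dec OO_cg[OF ok] OO_sd[OF ok]])
    show "samedata n p (tr ?O) (diagm lam)" by (rule OO_tr_sd)
    show "ro n (tr ?O) = lam" using OO_co[OF ok] by (simp add: ro_tr)
    show "co n (tr ?O) = lam" using OO_ro[OF ok] by (simp add: co_tr)
  qed
  then show ?thesis using oblk_OO by simp
qed

end


lemma Theta_finite: "finite (Theta n r)"
proof -
  let ?S = "{f :: nat \<times> nat \<Rightarrow> nat. \<forall>x. (x \<in> cells n \<longrightarrow> f x \<in> {..r}) \<and> (x \<notin> cells n \<longrightarrow> f x = 0)}"
  have fin: "finite ?S" by (rule finite_set_of_finite_funs) (auto simp: cells_def)
  have "Theta n r \<subseteq> curry ` ?S"
  proof
    fix A assume A: "A \<in> Theta n r"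
    have le: "A i j \<le> r" if "i \<in> {1..n}" "j \<in> {1..n}" for i j
    proof -
      have "A i j \<le> (\<Sum>j=1..n. A i j)" by (rule member_le_sum) (use that in auto)
      also have "\<dots> \<le> (\<Sum>i=1..n. \<Sum>j=1..n. A i j)"
        by (rule member_le_sum[where f = "\<lambda>i. \<Sum>j=1..n. A i j"]) (use that in auto)
      finally show ?thesis using A unfolding Theta_def by simp
    qed
    have "case_prod A \<in> ?S" using A le unfolding Theta_def cells_def by (auto split: prod.splits)
    moreover have "A = curry (case_prod A)" by simp
    ultimately show "A \<in> curry ` ?S" by blast
  qed
  then show ?thesis using fin finite_subset by blast
qed

lemma eorb_app: "eorb A C = (if C = A then 1 else 0)" by (simp add: eorb_def)

lemma smult_right_e:
  assumes "O' \<in> Theta n r"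
  shows "smult n r x (eorb O') = (\<lambda>C. \<Sum>A\<in>Theta n r. if co n A = ro n O' \<and> gprod n r A O' = C then x A else (0::'k::field))"
proof
  fix C
  show "smult n r x (eorb O') C = (\<Sum>A\<in>Theta n r. if co n A = ro n O' \<and> gprod n r A O' = C then x A else 0)"
    unfolding smult_def
  proof (rule sum.cong[OF refl])
    fix A assume "A \<in> Theta n r"
    have "(\<Sum>B\<in>Theta n r. if co n A = ro n B \<and> gprod n r A B = C then x A * eorb O' B else 0)
       = (\<Sum>B\<in>Theta n r. if B = O' then (if co n A = ro n O' \<and> gprod n r A O' = C then x A else 0) else 0)"
      by (rule sum.cong[OF refl]) (auto simp: eorb_app)
    also have "\<dots> = (if co n A = ro n O' \<and> gprod n r A O' = C then x A else 0)"
      using assms Theta_finite by (simp add: sum.delta')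
    finally show "(\<Sum>B\<in>Theta n r. if co n A = ro n B \<and> gprod n r A B = C then x A * eorb O' B else 0)
       = (if co n A = ro n O' \<and> gprod n r A O' = C then x A else 0)" .
  qed
qed

lemma smult_left_e:
  assumes "O' \<in> Theta n r"
  shows "smult n r (eorb O') x = (\<lambda>C. \<Sum>B\<in>Theta n r. if co n O' = ro n B \<and> gprod n r O' B = C then x B else (0::'k::field))"
proof
  fix C
  have "smult n r (eorb O') x C = (\<Sum>A\<in>Theta n r. if A = O' then
      (\<Sum>B\<in>Theta n r. if co n O' = ro n B \<and> gprod n r O' B = C then x B else 0) else 0)"
    unfolding smult_def
    by (rule sum.cong[OF refl]) (auto simp: eorb_app intro!: sum.neutral sum.cong)
  also have "\<dots> = (\<Sum>B\<in>Theta n r. if co n O' = ro n B \<and> gprod n r O' B = C then x B else 0)"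
    using assms Theta_finite by (simp add: sum.delta')
  finally show "smult n r (eorb O') x C = (\<Sum>B\<in>Theta n r. if co n O' = ro n B \<and> gprod n r O' B = C then x B else 0)" .
qed

lemma ideal_eq:
  fixes P :: "mat \<Rightarrow> bool" and g :: "mat \<Rightarrow> mat"
  assumes T: "T \<subseteq> Theta n r" and gT: "\<And>A. A \<in> Theta n r \<Longrightarrow> P A \<Longrightarrow> g A \<in> T"
    and Tg: "\<And>A. A \<in> T \<Longrightarrow> P A \<and> g A = A"
  shows "{(\<lambda>C. \<Sum>A\<in>Theta n r. if P A \<and> g A = C then x A else (0::'k::field)) | x. x \<in> S0 n r} = kspan T"
proof
  have finT: "finite T" using T Theta_finite finite_subset by blast
  have kval: "(\<Sum>A'\<in>T. c A' * eorb A' C) = (if C \<in> T then c C else 0)" for c :: "mat \<Rightarrow> 'k" and C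
    using finT by (simp add: eorb_app sum.delta' if_distrib[of "\<lambda>z. _ * z"] cong: if_cong)
  show "{(\<lambda>C. \<Sum>A\<in>Theta n r. if P A \<and> g A = C then x A else (0::'k)) | x. x \<in> S0 n r} \<subseteq> kspan T"
  proof clarify
    fix x :: "mat \<Rightarrow> 'k" assume "x \<in> S0 n r"
    define c where "c A' = (\<Sum>A\<in>Theta n r. if P A \<and> g A = A' then x A else 0)" for A'
    have "(\<lambda>C. \<Sum>A\<in>Theta n r. if P A \<and> g A = C then x A else 0) = (\<lambda>C. \<Sum>A'\<in>T. c A' * eorb A' C)"
    proof
      fix C
      show "(\<Sum>A\<in>Theta n r. if P A \<and> g A = C then x A else 0) = (\<Sum>A'\<in>T. c A' * eorb A' C)"
      proof (cases "C \<in> T")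
        case True then show ?thesis using kval c_def by simp
      next
        case False
        have "(\<Sum>A\<in>Theta n r. if P A \<and> g A = C then x A else 0) = 0"
          by (rule sum.neutral) (use gT False in auto)
        then show ?thesis using kval False by simp
      qed
    qed
    then show "(\<lambda>C. \<Sum>A\<in>Theta n r. if P A \<and> g A = C then x A else 0) \<in> kspan T"
      unfolding kspan_def by blast
  qed
  show "kspan T \<subseteq> {(\<lambda>C. \<Sum>A\<in>Theta n r. if P A \<and> g A = C then x A else (0::'k)) | x. x \<in> S0 n r}"
  proof
    fix y :: "mat \<Rightarrow> 'k" assume "y \<in> kspan T"
    then obtain c where c: "y = (\<lambda>C. \<Sum>A\<in>T. c A * eorb A C)" unfolding kspan_def by blast
    define x where "x A = (if A \<in> T then c A else 0)" for A
    have xS: "x \<in> S0 n r" unfolding S0_def x_def using T by auto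
    have "y = (\<lambda>C. \<Sum>A\<in>Theta n r. if P A \<and> g A = C then x A else 0)"
    proof
      fix C
      have "(\<Sum>A\<in>Theta n r. if P A \<and> g A = C then x A else 0) = (\<Sum>A\<in>Theta n r. if A = C then x A else 0)"
        by (rule sum.cong[OF refl]) (use Tg in \<open>auto simp: x_def\<close>)
      also have "\<dots> = (if C \<in> T then c C else 0)"
        using Theta_finite T by (auto simp: sum.delta x_def)
      finally show "y C = (\<Sum>A\<in>Theta n r. if P A \<and> g A = C then x A else 0)" using c kval by simp
    qed
    then show "y \<in> {(\<lambda>C. \<Sum>A\<in>Theta n r. if P A \<and> g A = C then x A else (0::'k)) | x. x \<in> S0 n r}"
      using xS by blast
  qed
qed


lemma diag_props:
  assumes lamL: "lam \<in> Lam n r"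
  shows "diagm lam \<in> Theta n r" "co n (diagm lam) = lam" "ro n (diagm lam) = lam"
proof -
  have z: "lam j = 0" if "j \<notin> {1..n}" for j using Lam_supp[OF lamL, of j] that by blast
  show c: "co n (diagm lam) = lam"
  proof
    fix j show "co n (diagm lam) j = lam j"
      unfolding co_def diagm_def using z[of j] by (auto simp: sum.delta')
  qed
  show "ro n (diagm lam) = lam"
  proof
    fix j show "ro n (diagm lam) j = lam j"
      unfolding ro_def diagm_def using z[of j] by (auto simp: sum.delta)
  qed
  have "(\<Sum>i=1..n. \<Sum>j=1..n. diagm lam i j) = (\<Sum>i=1..n. lam i)"
    unfolding diagm_def by (rule sum.cong[OF refl]) (auto simp: sum.delta)
  also have "\<dots> = r" using lamL unfolding Lam_def by simp
  moreover have "\<forall>i j. diagm lam i j \<noteq> 0 \<longrightarrow> i \<in> {1..n} \<and> j \<in> {1..n}"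
    unfolding diagm_def using Lam_supp[OF lamL] by auto
  ultimately show "diagm lam \<in> Theta n r" unfolding Theta_def by auto
qed

context
  fixes n r :: nat and lam :: comp and p :: "nat list"
  assumes npos: "0 < n" and lamL: "lam \<in> Lam n r" and dec: "is_decomp n p"
begin

lemma dd: "diagm lam \<in> Theta n r" "co n (diagm lam) = lam" using diag_props[OF lamL] by auto

lemma oblk_OOd: "o_blk lam p = OOf n r p (diagm lam)"
  by (rule oblk_OO[OF npos lamL dec dd])

lemma oblk_Theta: "o_blk lam p \<in> Theta n r" using OO_Theta[OF npos lamL dec dd] oblk_OOd by simp
lemma oblk_ro: "ro n (o_blk lam p) = lam" using OO_ro[OF npos lamL dec dd] oblk_OOd by simp
lemma oblk_co: "co n (o_blk lam p) = lam" using OO_co[OF npos lamL dec dd] oblk_OOd by simp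
lemma oblk_supp: "supp n (o_blk lam p)" using OO_supp[OF npos lamL dec dd] oblk_OOd by simp
lemma oblk_cg: "col_generic n p (o_blk lam p)" using OO_cg[OF npos lamL dec dd] oblk_OOd by simp
lemma oblk_sd: "samedata n p (o_blk lam p) (diagm lam)" using OO_sd[OF npos lamL dec dd] oblk_OOd by simp

lemma gprod_left:
  assumes AT: "A \<in> Theta n r" and coA: "co n A = lam"
  shows "gprod n r A (o_blk lam p) \<in> Theta n r" "co n (gprod n r A (o_blk lam p)) = lam"
    "col_generic n p (gprod n r A (o_blk lam p))"
    "col_generic n p A \<Longrightarrow> gprod n r A (o_blk lam p) = A"
proof -
  have e: "gprod n r A (o_blk lam p) = CCf n r p A"
    using oblk_OO[OF npos lamL dec AT coA] gprod_CC[OF npos lamL dec AT coA] by simp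
  show "gprod n r A (o_blk lam p) \<in> Theta n r" "co n (gprod n r A (o_blk lam p)) = lam"
    "col_generic n p (gprod n r A (o_blk lam p))"
    using e CC_Theta[OF npos lamL dec AT coA] CC_co[OF npos lamL dec AT coA] CC_cg[OF npos lamL dec AT coA] by auto
  show "col_generic n p A \<Longrightarrow> gprod n r A (o_blk lam p) = A"
    using e CC_eq_A[OF npos lamL dec AT coA] by simp
qed

lemma gprod_right:
  assumes BT: "B \<in> Theta n r" and roB: "ro n B = lam"
  shows "gprod n r (o_blk lam p) B \<in> Theta n r" "ro n (gprod n r (o_blk lam p) B) = lam"
    "row_generic n p (gprod n r (o_blk lam p) B)"
    "row_generic n p B \<Longrightarrow> gprod n r (o_blk lam p) B = B"
proof -
  let ?A = "tr B" and ?O = "o_blk lam p"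
  have AT: "?A \<in> Theta n r" using BT Theta_tr by blast
  have coA: "co n ?A = lam" using roB by (simp add: co_tr)
  let ?C1 = "CCf n r p ?A"
  have OO: "OOf n r p ?A = ?O" using oblk_OO[OF npos lamL dec AT coA] by simp
  have ch: "occurs n r ?A ?O ?C1 \<and> (\<forall>C'. occurs n r ?A ?O C' \<and> C' \<noteq> ?C1 \<longrightarrow> stabdim n ?C1 < stabdim n C')"
    using CC_char[OF npos lamL dec AT coA] OO by simp
  have otr: "tr ?O = ?O" using oblk_tr[OF npos lamL dec AT coA] .
  have e: "gprod n r ?O B = tr ?C1"
  proof (rule gprod_char)
    show "occurs n r ?O B (tr ?C1)"
      using ch occurs_tr_iff[of n r ?O B "tr ?C1"] otr by simp
    fix C' assume occ: "occurs n r ?O B C'" and ne: "C' \<noteq> tr ?C1"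
    have "occurs n r ?A ?O (tr C')" using occ occurs_tr_iff[of n r ?O B C'] otr by simp
    moreover have "tr C' \<noteq> ?C1" using ne tr_tr[of C'] by metis
    ultimately have "stabdim n ?C1 < stabdim n (tr C')" using ch by blast
    then show "stabdim n (tr ?C1) < stabdim n C'" by (simp add: stabdim_tr)
  qed
  show "gprod n r ?O B \<in> Theta n r" using e CC_Theta[OF npos lamL dec AT coA] Theta_tr by simp
  show "ro n (gprod n r ?O B) = lam" using e CC_co[OF npos lamL dec AT coA] by (simp add: ro_tr)
  show "row_generic n p (gprod n r ?O B)" using e CC_cg[OF npos lamL dec AT coA] by (simp add: row_col_generic)
  show "row_generic n p B \<Longrightarrow> gprod n r ?O B = B"
    using e CC_eq_A[OF npos lamL dec AT coA] by (simp add: row_col_generic)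
qed

lemma part2:
  "{smult n r x (eorb (o_blk lam p)) | x :: mat \<Rightarrow> 'k::field. x \<in> S0 n r}
     = kspan {A \<in> Theta n r. co n A = lam \<and> col_generic n p A}"
proof -
  have "{smult n r x (eorb (o_blk lam p)) | x :: mat \<Rightarrow> 'k. x \<in> S0 n r} =
    {(\<lambda>C. \<Sum>A\<in>Theta n r. if co n A = lam \<and> gprod n r A (o_blk lam p) = C then x A else (0::'k)) | x. x \<in> S0 n r}"
  proof -
    have eq: "smult n r x (eorb (o_blk lam p)) =
      (\<lambda>C. \<Sum>A\<in>Theta n r. if co n A = lam \<and> gprod n r A (o_blk lam p) = C then x A else (0::'k))" for x :: "mat \<Rightarrow> 'k"
      using smult_right_e[OF oblk_Theta, of x] oblk_ro by simp
    show ?thesis by (simp only: eq)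
  qed
  also have "\<dots> = kspan {A \<in> Theta n r. co n A = lam \<and> col_generic n p A}"
    by (rule ideal_eq) (use gprod_left in auto)
  finally show ?thesis .
qed

lemma part4:
  "{smult n r (eorb (o_blk lam p)) x | x :: mat \<Rightarrow> 'k::field. x \<in> S0 n r}
     = kspan {A \<in> Theta n r. ro n A = lam \<and> row_generic n p A}"
proof -
  have "{smult n r (eorb (o_blk lam p)) x | x :: mat \<Rightarrow> 'k. x \<in> S0 n r} =
    {(\<lambda>C. \<Sum>B\<in>Theta n r. if ro n B = lam \<and> gprod n r (o_blk lam p) B = C then x B else (0::'k)) | x. x \<in> S0 n r}"
  proof -
    have eq: "smult n r (eorb (o_blk lam p)) x =
      (\<lambda>C. \<Sum>B\<in>Theta n r. if ro n B = lam \<and> gprod n r (o_blk lam p) B = C then x B else (0::'k))" for x :: "mat \<Rightarrow> 'k"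
      using smult_left_e[OF oblk_Theta, of x] oblk_co by (simp add: eq_commute[of lam])
    show ?thesis by (simp only: eq)
  qed
  also have "\<dots> = kspan {A \<in> Theta n r. ro n A = lam \<and> row_generic n p A}"
    by (rule ideal_eq) (use gprod_right in auto)
  finally show ?thesis .
qed

end


lemma sum_list_rep1: "sum_list (replicate k (1::nat)) = k" "sum_list (replicate k (Suc 0)) = k"
  by (induct k) auto

context
  fixes n i :: nat
  assumes i: "1 \<le> i" "i < n"
begin

lemma mdec_len: "length (mdec n i) = n - 1"
  using i by (simp add: mdec_def)

lemma mdec_dec: "is_decomp n (mdec n i)"
  using i by (auto simp: mdec_def is_decomp_def sum_list_rep1)

lemma ps_mdec: "t \<le> n - 1 \<Longrightarrow> ps (mdec n i) t = (if t < i then t else t + 1)"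
proof -
  assume t: "t \<le> n - 1"
  show ?thesis
  proof (cases "t < i")
    case True
    then have "take t (mdec n i) = replicate t 1" using i
      by (simp add: mdec_def take_append min_def)
    then show ?thesis using True by (simp add: ps_def sum_list_rep1)
  next
    case False
    then have "take t (mdec n i) = replicate (i - 1) 1 @ [2] @ replicate (t - i) 1" using i t
      by (simp add: mdec_def take_append min_def Suc_diff_le)
    then show ?thesis using False i by (simp add: ps_def sum_list_rep1)
  qed
qed


lemma generic_sub_single: "generic_sub R {a..a} A"
  unfolding generic_sub_def by auto

lemma cg_mdec: "col_generic n (mdec n i) A \<longleftrightarrow> generic_sub {1..n} {i, Suc i} A"
proof -
  have blk: "generic_sub {1..n} {ps (mdec n i) t + 1..ps (mdec n i) (Suc t)} A \<longleftrightarrow>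
      (t = i - 1 \<longrightarrow> generic_sub {1..n} {i, Suc i} A)" if t: "t < n - 1" for t
  proof -
    have p1: "ps (mdec n i) t = (if t < i then t else t + 1)" using ps_mdec t by simp
    have p2: "ps (mdec n i) (Suc t) = (if Suc t < i then Suc t else Suc t + 1)" using ps_mdec t by simp
    show ?thesis
    proof (cases "t = i - 1")
      case True
      then have "{ps (mdec n i) t + 1..ps (mdec n i) (Suc t)} = {i, Suc i}" using p1 p2 i by auto
      then show ?thesis using True by simp
    next
      case False
      then have "\<exists>a. {ps (mdec n i) t + 1..ps (mdec n i) (Suc t)} = {a..a}" using p1 p2 i by auto
      then show ?thesis using False generic_sub_single by metis
    qed
  qed
  have "col_generic n (mdec n i) A \<longleftrightarrow> (\<forall>t<n - 1. t = i - 1 \<longrightarrow> generic_sub {1..n} {i, Suc i} A)"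
    unfolding col_generic_def mdec_len using blk by simp
  also have "\<dots> \<longleftrightarrow> generic_sub {1..n} {i, Suc i} A" using i by auto
  finally show ?thesis .
qed

lemma part1:
  assumes lamL: "lam \<in> Lam n r" and z: "lam i * lam (Suc i) = 0"
  shows "o_blk lam (mdec n i) = diagm lam"
proof -
  let ?p = "mdec n i" let ?O = "o_blk lam (mdec n i)"
  have npos: "0 < n" using i by simp
  note dec = mdec_dec
  note props = oblk_supp[OF npos lamL dec] oblk_cg[OF npos lamL dec] oblk_sd[OF npos lamL dec]
    oblk_ro[OF npos lamL dec] oblk_co[OF npos lamL dec]
  note rb = row_block[OF npos lamL dec props]
  note cb = col_block[OF npos lamL dec props]
  have it: "i - 1 < length ?p" using i mdec_len by simp
  have pi: "ps ?p (i - 1) = i - 1" "ps ?p (Suc (i - 1)) = Suc i" using ps_mdec i by auto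
  have bi: "{ps ?p (i - 1)<..ps ?p (Suc (i - 1))} = {i, Suc i}" using pi i by auto
  have m1: "i \<in> {ps ?p (i - 1)<..ps ?p (Suc (i - 1))}" and m2: "Suc i \<in> {ps ?p (i - 1)<..ps ?p (Suc (i - 1))}"
    using bi by auto
  have R1: "?O i i + ?O i (Suc i) = lam i" using rb[OF it m1] unfolding bi by simp
  have R2: "?O (Suc i) i + ?O (Suc i) (Suc i) = lam (Suc i)" using rb[OF it m2] unfolding bi by simp
  have C1: "?O i i + ?O (Suc i) i = lam i" using cb[OF it m1] unfolding bi by simp
  have C2: "?O i (Suc i) + ?O (Suc i) (Suc i) = lam (Suc i)" using cb[OF it m2] unfolding bi by simp
  have four: "?O i i = lam i" "?O i (Suc i) = 0" "?O (Suc i) i = 0" "?O (Suc i) (Suc i) = lam (Suc i)"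
    using R1 R2 C1 C2 z by auto
  show ?thesis
  proof (intro ext)
    fix a b
    show "?O a b = diagm lam a b"
    proof (cases "a \<in> {1..n} \<and> b \<in> {1..n}")
      case False
      then have "?O a b = 0" using props(1) unfolding supp_def by blast
      moreover have "diagm lam a b = 0" using False Lam_supp[OF lamL, of a] by (auto simp: diagm_def)
      ultimately show ?thesis by simp
    next
      case True
      then have b1: "1 \<le> b" "b \<le> n" and a1: "1 \<le> a" "a \<le> n" by auto
      let ?t = "blkof ?p b"
      note bt = blkof[OF dec b1]
      show ?thesis
      proof (cases "ps ?p ?t < a \<and> a \<le> ps ?p (Suc ?t)")
        case False
        then have "?O a b = 0" using blockdiag[OF dec props(3) a1 bt] by simp
        moreover have "a \<noteq> b" using False bt by auto
        ultimately show ?thesis by (simp add: diagm_def)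
      next
        case ain: True
        have tl: "?t \<le> n - 1" "Suc ?t \<le> n - 1" using bt(1) mdec_len by auto
        show ?thesis
        proof (cases "?t = i - 1")
          case True
          have q: "ps ?p ?t = i - 1" "ps ?p (Suc ?t) = Suc i" using pi True by simp_all
          have ai: "a = i \<or> a = Suc i" using ain q by linarith
          have bi': "b = i \<or> b = Suc i" using bt(2,3) q by linarith
          show ?thesis
          proof (cases "a = i")
            case True
            then show ?thesis using bi' four by (cases "b = i") (simp_all add: diagm_def)
          next
            case False
            then have "a = Suc i" using ai by simp
            then show ?thesis using bi' four by (cases "b = i") (simp_all add: diagm_def)
          qed
        next
          case False
          then have eq: "ps ?p (Suc ?t) = Suc (ps ?p ?t)"
            using ps_mdec[OF tl(1)] ps_mdec[OF tl(2)] i by auto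
          then have ab: "a = b" "a = Suc (ps ?p ?t)" using ain bt by auto
          have "{ps ?p ?t<..ps ?p (Suc ?t)} = {a}" using eq ab by auto
          then have "?O a a = lam a" using rb[OF bt(1), of a] ab by simp
          then show ?thesis using ab by (simp add: diagm_def)
        qed
      qed
    qed
  qed
qed

end


theorem mainTheorem11:
  fixes n r :: nat and lam :: comp
  assumes "0 < n" "0 < r" "lam \<in> Lam n r"
  shows
    "(\<forall>i. 1 \<le> i \<and> i < n \<and> lam i * lam (Suc i) = 0 \<longrightarrow>
        (eorb (a_orb n lam i) :: mat \<Rightarrow> 'k::field) = eorb (diagm lam))
     \<and> (\<forall>p. is_decomp n p \<longrightarrow>
        {smult n r x (eorb (o_blk lam p)) | x :: mat \<Rightarrow> 'k. x \<in> S0 n r}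
          = kspan {A \<in> Theta n r. co n A = lam \<and> col_generic n p A})
     \<and> (\<forall>i. 1 \<le> i \<and> i < n \<longrightarrow>
        {smult n r x (eorb (a_orb n lam i)) | x :: mat \<Rightarrow> 'k. x \<in> S0 n r}
          = kspan {A \<in> Theta n r. co n A = lam \<and> generic_sub {1..n} {i, Suc i} A})
     \<and> (\<forall>p. is_decomp n p \<longrightarrow>
        {smult n r (eorb (o_blk lam p)) x | x :: mat \<Rightarrow> 'k. x \<in> S0 n r}
          = kspan {A \<in> Theta n r. ro n A = lam \<and> row_generic n p A})"
proof (intro conjI allI impI)
  note npos = assms(1) and lamL = assms(3)
  fix i assume a: "1 \<le> i \<and> i < n \<and> lam i * lam (Suc i) = 0"
  then show "(eorb (a_orb n lam i) :: mat \<Rightarrow> 'k::field) = eorb (diagm lam)"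
    using part1[of i n lam r] lamL by (simp add: a_orb_def)
next
  note npos = assms(1) and lamL = assms(3)
  fix p assume "is_decomp n p"
  then show "{smult n r x (eorb (o_blk lam p)) | x :: mat \<Rightarrow> 'k. x \<in> S0 n r}
          = kspan {A \<in> Theta n r. co n A = lam \<and> col_generic n p A}"
    using part2[OF npos lamL] by blast
next
  note npos = assms(1) and lamL = assms(3)
  fix i assume a: "1 \<le> i \<and> i < n"
  have dec: "is_decomp n (mdec n i)" using mdec_dec a by blast
  have "{A \<in> Theta n r. co n A = lam \<and> col_generic n (mdec n i) A} =
     {A \<in> Theta n r. co n A = lam \<and> generic_sub {1..n} {i, Suc i} A}"
    using cg_mdec[of i n] a by auto
  then show "{smult n r x (eorb (a_orb n lam i)) | x :: mat \<Rightarrow> 'k. x \<in> S0 n r}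
          = kspan {A \<in> Theta n r. co n A = lam \<and> generic_sub {1..n} {i, Suc i} A}"
    using part2[OF npos lamL dec] unfolding a_orb_def by simp
next
  note npos = assms(1) and lamL = assms(3)
  fix p assume "is_decomp n p"
  then show "{smult n r (eorb (o_blk lam p)) x | x :: mat \<Rightarrow> 'k. x \<in> S0 n r}
          = kspan {A \<in> Theta n r. ro n A = lam \<and> row_generic n p A}"
    using part4[OF npos lamL] by blast
qed


end
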